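(* Let $S=(\mathrm{Id}_n+W_dV_d)\cdots(\mathrm{Id}_n+W_1V_1)Z$ and, for $\eta\in\mathbb C$, $Z_\eta=Z+\eta S$. Then for all $\mu,\eta\in\mathbb C$ and all $k,l\in\mathbb N$, $\{\operatorname{tr}Z_\mu^k,\operatorname{tr}Z_\eta^l\}=0$ on $\mathcal C^\times_{n,d,q}$.
   Context: Fix integers $n\ge1$, $d\ge1$ and $q\in\mathbb C^\times$ not a root of unity. Greek indices range over $\{1,\dots,d\}$; set $o(\alpha,\beta)=0$ if $\alpha=\beta$, $o(\alpha,\beta)=1$ if $\alpha<\beta$, $o(\alpha,\beta)=-1$ if $\alpha>\beta$. Let $\mathcal M^\times_{n,d,q}$ be the affine variety of tuples $(X,Z,V_1,\dots,V_d,W_1,\dots,W_d)$ with $X,Z\in\mathrm{GL}_n(\mathbb C)$, $V_\alpha\in\mathrm{Mat}_{1\times n}(\mathbb C)$, $W_\alpha\in\mathrm{Mat}_{n\times 1}(\mathbb C)$, such that every $\mathrm{Id}_n+W_\alpha V_\alpha$ is invertible and $XZX^{-1}Z^{-1}(\mathrm{Id}_n+W_1V_1)^{-1}\cdots(\mathrm{Id}_n+W_dV_d)^{-1}=q\,\mathrm{Id}_n$. $\mathrm{GL}_n$ acts by $g\cdot(X,Z,V_\alpha,W_\alpha)=(gXg^{-1},gZg^{-1},V_\alpha g^{-1},gW_\alpha)$; the action is free and $\mathcal C^\times_{n,d,q}=\mathcal M^\times_{n,d,q}/\!/\mathrm{GL}_n$ is a smooth affine variety of dimension $2nd$ with $\mathbb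 C[\mathcal C^\times_{n,d,q}]=\mathbb C[\mathcal M^\times_{n,d,q}]^{\mathrm{GL}_n}$. Write $V_{\alpha,j}$, $W_{\alpha,k}$ for the entries. Let $\{-,-\}$ be the antisymmetric biderivation on functions of $(X,Z,V_\alpha,W_\alpha)$ (Van den Bergh's quasi-Poisson bracket) given by $\{X_{ij},X_{kl}\}=\tfrac12(\delta_{il}(X^2)_{kj}-\delta_{kj}(X^2)_{il})$, $\{Z_{ij},Z_{kl}\}=\tfrac12(\delta_{kj}(Z^2)_{il}-\delta_{il}(Z^2)_{kj})$, $\{X_{ij},Z_{kl}\}=\tfrac12((ZX)_{kj}\delta_{il}+\delta_{kj}(XZ)_{il}+Z_{kj}X_{il}-X_{kj}Z_{il})$, $\{U_{ij},W_{\alpha,k}\}=\tfrac12(\delta_{kj}(UW_\alpha)_i-U_{kj}W_{\alpha,i})$, $\{U_{ij},V_{\alpha,l}\}=\tfrac12((V_\alpha U)_j\delta_{il}-V_{\alpha,j}U_{il})$ for $U\in\{X,Z\}$, $\{V_{\alpha,j},V_{\beta,l}\}=\tfrac12 o(\beta,\alpha)(V_{\beta,j}V_{\alpha,l}+V_{\alpha,j}V_{\beta,l})$, $\{W_{\alpha,i},W_{\beta,k}\}=\tfrac12 o(\beta,\alpha)(W_{\beta,k}W_{\alpha,i}+W_{\alpha,k}W_{\beta,i})$, $\{V_{\alpha,j},W_{\beta,k}\}=\delta_{\alpha\beta}(\delta_{kj}+\tfrac12W_{\alpha,k}V_{\alpha,j}+\tfrac12\delta_{kj}V_\alpha W_\alpha)+\tfrac12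 o(\alpha,\beta)(\delta_{kj}V_\alpha W_\beta+W_{\beta,k}V_{\alpha,j})$. Restricted to $\mathrm{GL}_n$-invariant functions this bracket induces a non-degenerate Poisson bracket on $\mathcal C^\times_{n,d,q}$ (quasi-Hamiltonian reduction); this is the Poisson bracket $\{-,-\}$ on $\mathcal C^\times_{n,d,q}$. *)

theory Defs
  imports "HOL-Analysis.Analysis" "Jordan_Normal_Form.Matrix"
begin

(* Coordinates on the ambient space of tuples (X,Z,V_1..V_d,W_1..W_d):
   Xc i j = X_{ij}, Zc i j = Z_{ij}  (0 <= i,j < n),
   Vc a j = V_{a,j}, Wc a k = W_{a,k} (1 <= a <= d, 0 <= j,k < n). *)
datatype coord = Xc nat nat | Zc nat nat | Vc nat nat | Wc nat nat

type_synonym point = "coord \<Rightarrow> complex"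

definition coords :: "nat \<Rightarrow> nat \<Rightarrow> coord set" where
  "coords n d =
     {Xc i j | i j. i < n \<and> j < n} \<union> {Zc i j | i j. i < n \<and> j < n} \<union>
     {Vc a j | a j. a \<in> {1..d} \<and> j < n} \<union> {Wc a k | a k. a \<in> {1..d} \<and> k < n}"

definition kd :: "nat \<Rightarrow> nat \<Rightarrow> complex" where
  "kd i j = (if i = j then 1 else 0)"

definition ord_sign :: "nat \<Rightarrow> nat \<Rightarrow> complex" where
  "ord_sign a b = (if a = b then 0 else if a < b then 1 else -1)"

definition Xmat :: "nat \<Rightarrow> point \<Rightarrow> complex mat" where
  "Xmat n p = mat n n (\<lambda>(i,j). p (Xc i j))"
definition Zmat :: "nat \<Rightarrow> point \<Rightarrow> complex mat" where
  "Zmat n p = mat n n (\<lambda>(i,j). p (Zc i j))"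
definition Vrow :: "nat \<Rightarrow> point \<Rightarrow> nat \<Rightarrow> complex mat" where
  "Vrow n p a = mat 1 n (\<lambda>(i,j). p (Vc a j))"
definition Wcol :: "nat \<Rightarrow> point \<Rightarrow> nat \<Rightarrow> complex mat" where
  "Wcol n p a = mat n 1 (\<lambda>(i,j). p (Wc a i))"

definition Amat :: "nat \<Rightarrow> point \<Rightarrow> nat \<Rightarrow> complex mat" where
  "Amat n p a = 1\<^sub>m n + Wcol n p a * Vrow n p a"

definition inv_of :: "nat \<Rightarrow> complex mat \<Rightarrow> bool" where
  "inv_of n A \<longleftrightarrow> A \<in> carrier_mat n n \<and> invertible_mat A"

definition minv :: "nat \<Rightarrow> complex mat \<Rightarrow> complex mat" where
  "minv n A = (SOME B. B \<in> carrier_mat n n \<and> A * B = 1\<^sub>m n \<and> B * A = 1\<^sub>m n)"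

definition mprod :: "nat \<Rightarrow> complex mat list \<Rightarrow> complex mat" where
  "mprod n Ms = foldr (*) Ms (1\<^sub>m n)"

definition Mx :: "nat \<Rightarrow> nat \<Rightarrow> complex \<Rightarrow> point set" where
  "Mx n d q = {p. invertible_mat (Xmat n p) \<and> invertible_mat (Zmat n p) \<and>
      (\<forall>a\<in>{1..d}. invertible_mat (Amat n p a)) \<and>
      Xmat n p * Zmat n p * minv n (Xmat n p) * minv n (Zmat n p) *
        mprod n (map (\<lambda>a. minv n (Amat n p a)) [1..<d+1]) = q \<cdot>\<^sub>m 1\<^sub>m n}"

definition Smat :: "nat \<Rightarrow> nat \<Rightarrow> point \<Rightarrow> complex mat" where
  "Smat n d p = mprod n (map (\<lambda>a. Amat n p a) (rev [1..<d+1])) * Zmat n p"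

definition Zeta :: "nat \<Rightarrow> nat \<Rightarrow> complex \<Rightarrow> point \<Rightarrow> complex mat" where
  "Zeta n d \<eta> p = Zmat n p + \<eta> \<cdot>\<^sub>m Smat n d p"

definition mtrace :: "complex mat \<Rightarrow> complex" where
  "mtrace A = (\<Sum>i<dim_row A. A $$ (i, i))"

definition trZpow :: "nat \<Rightarrow> nat \<Rightarrow> complex \<Rightarrow> nat \<Rightarrow> point \<Rightarrow> complex" where
  "trZpow n d \<eta> k p = mtrace (Zeta n d \<eta> p ^\<^sub>m k)"

(* brackets of coordinate functions, for the canonical orderings
   (X < Z < V < W); other orderings follow by antisymmetry *)
definition ent :: "nat \<Rightarrow> point \<Rightarrow> (nat \<Rightarrow> nat \<Rightarrow> coord) \<Rightarrow> (nat \<Rightarrow> nat \<Rightarrow> coord) \<Rightarrow> nat \<Rightarrow> nat \<Rightarrow> complex" where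
  "ent n p A B i j = (\<Sum>m<n. p (A i m) * p (B m j))"

fun cb0 :: "nat \<Rightarrow> point \<Rightarrow> coord \<Rightarrow> coord \<Rightarrow> complex" where
  "cb0 n p (Xc i j) (Xc k l) = 1/2 * (kd i l * ent n p Xc Xc k j - kd k j * ent n p Xc Xc i l)"
| "cb0 n p (Zc i j) (Zc k l) = 1/2 * (kd k j * ent n p Zc Zc i l - kd i l * ent n p Zc Zc k j)"
| "cb0 n p (Xc i j) (Zc k l) = 1/2 * (ent n p Zc Xc k j * kd i l + kd k j * ent n p Xc Zc i l
                                     + p (Zc k j) * p (Xc i l) - p (Xc k j) * p (Zc i l))"
| "cb0 n p (Xc i j) (Wc a k) = 1/2 * (kd k j * (\<Sum>m<n. p (Xc i m) * p (Wc a m)) - p (Xc k j) * p (Wc a i))"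
| "cb0 n p (Zc i j) (Wc a k) = 1/2 * (kd k j * (\<Sum>m<n. p (Zc i m) * p (Wc a m)) - p (Zc k j) * p (Wc a i))"
| "cb0 n p (Xc i j) (Vc a l) = 1/2 * ((\<Sum>m<n. p (Vc a m) * p (Xc m j)) * kd i l - p (Vc a j) * p (Xc i l))"
| "cb0 n p (Zc i j) (Vc a l) = 1/2 * ((\<Sum>m<n. p (Vc a m) * p (Zc m j)) * kd i l - p (Vc a j) * p (Zc i l))"
| "cb0 n p (Vc a j) (Vc b l) = 1/2 * ord_sign b a * (p (Vc b j) * p (Vc a l) + p (Vc a j) * p (Vc b l))"
| "cb0 n p (Wc a i) (Wc b k) = 1/2 * ord_sign b a * (p (Wc b k) * p (Wc a i) + p (Wc a k) * p (Wc b i))"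
| "cb0 n p (Vc a j) (Wc b k) =
     kd a b * (kd k j + 1/2 * p (Wc a k) * p (Vc a j) + 1/2 * kd k j * (\<Sum>m<n. p (Vc a m) * p (Wc a m)))
     + 1/2 * ord_sign a b * (kd k j * (\<Sum>m<n. p (Vc a m) * p (Wc b m)) + p (Wc b k) * p (Vc a j))"
| "cb0 n p _ _ = 0"

fun crank :: "coord \<Rightarrow> nat" where
  "crank (Xc _ _) = 0" | "crank (Zc _ _) = 1" | "crank (Vc _ _) = 2" | "crank (Wc _ _) = 3"

definition cb :: "nat \<Rightarrow> point \<Rightarrow> coord \<Rightarrow> coord \<Rightarrow> complex" where
  "cb n p a b = (if crank a \<le> crank b then cb0 n p a b else - cb0 n p b a)"

definition pd :: "(point \<Rightarrow> complex) \<Rightarrow> coord \<Rightarrow> point \<Rightarrow> complex" where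
  "pd f c p = deriv (\<lambda>t. f (p(c := p c + t))) 0"

definition qpb :: "nat \<Rightarrow> nat \<Rightarrow> (point \<Rightarrow> complex) \<Rightarrow> (point \<Rightarrow> complex) \<Rightarrow> point \<Rightarrow> complex" where
  "qpb n d f g p = (\<Sum>a\<in>coords n d. \<Sum>b\<in>coords n d. pd f a p * pd g b p * cb n p a b)"

end

theory Submission
  imports Defs
begin

inductive_set pf :: "(point \<Rightarrow> complex) set" where
  pf_const: "(\<lambda>q. c) \<in> pf"
| pf_coord: "(\<lambda>q. q x) \<in> pf"
| pf_add: "f \<in> pf \<Longrightarrow> g \<in> pf \<Longrightarrow> (\<lambda>q. f q + g q) \<in> pf"
| pf_mult: "f \<in> pf \<Longrightarrow> g \<in> pf \<Longrightarrow> (\<lambda>q. f q * g q) \<in> pf"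

lemma pf_sum: "finite S \<Longrightarrow> (\<And>m. m \<in> S \<Longrightarrow> f m \<in> pf) \<Longrightarrow> (\<lambda>q. \<Sum>m\<in>S. f m q) \<in> pf"
proof (induction S rule: finite_induct)
  case empty then show ?case using pf_const[of 0] by simp
next
  case (insert x F)
  then show ?case using pf_add[of "f x" "\<lambda>q. \<Sum>m\<in>F. f m q"] by simp
qed

lemma pf_deriv: "f \<in> pf \<Longrightarrow> \<exists>D. ((\<lambda>t. f (p(c := p c + t))) has_field_derivative D) (at 0)"
proof (induction rule: pf.induct)
  case (pf_const c) then show ?case by (auto intro: derivative_eq_intros)
next
  case (pf_coord x)
  show ?case
  proof (cases "x = c")
    case True
    then show ?thesis by (auto intro!: derivative_eq_intros)
  next
    case False
    then show ?thesis by (auto intro!: derivative_eq_intros)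
  qed
next
  case (pf_add f g) then show ?case by (auto intro: derivative_eq_intros)
next
  case (pf_mult f g) then show ?case by (auto intro: derivative_eq_intros)
qed

lemma pd_has: "f \<in> pf \<Longrightarrow> ((\<lambda>t. f (p(c := p c + t))) has_field_derivative pd f c p) (at 0)"
  using pf_deriv[of f p c] unfolding pd_def by (auto simp: DERIV_imp_deriv)

lemma pd_const[simp]: "pd (\<lambda>q. a) c p = 0"
  unfolding pd_def by simp

lemma pd_coord: "pd (\<lambda>q. q x) c p = (if x = c then 1 else 0)"
proof -
  have "((\<lambda>t. (p(c := p c + t)) x) has_field_derivative (if x = c then 1 else 0)) (at 0)"
    by (cases "x = c") (auto intro!: derivative_eq_intros)
  then show ?thesis unfolding pd_def by (rule DERIV_imp_deriv)
qed

lemma pd_add: "f \<in> pf \<Longrightarrow> g \<in> pf \<Longrightarrow> pd (\<lambda>q. f q + g q) c p = pd f c p + pd g c p"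
proof -
  assume f: "f \<in> pf" and g: "g \<in> pf"
  have "((\<lambda>t. f (p(c := p c + t)) + g (p(c := p c + t))) has_field_derivative pd f c p + pd g c p) (at 0)"
    by (intro derivative_intros pd_has f g)
  then show ?thesis unfolding pd_def[of "\<lambda>q. f q + g q"] by (rule DERIV_imp_deriv)
qed

lemma pd_mult: "f \<in> pf \<Longrightarrow> g \<in> pf \<Longrightarrow> pd (\<lambda>q. f q * g q) c p = f p * pd g c p + pd f c p * g p"
proof -
  assume f: "f \<in> pf" and g: "g \<in> pf"
  have "((\<lambda>t. f (p(c := p c + t)) * g (p(c := p c + t))) has_field_derivative
         pd f c p * g (p(c := p c + 0)) + pd g c p * f (p(c := p c + 0))) (at 0)"
    by (rule DERIV_mult[OF pd_has[OF f] pd_has[OF g]])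
  then have "((\<lambda>t. f (p(c := p c + t)) * g (p(c := p c + t))) has_field_derivative
         f p * pd g c p + pd f c p * g p) (at 0)" by (simp add: algebra_simps)
  then show ?thesis unfolding pd_def[of "\<lambda>q. f q * g q"] by (rule DERIV_imp_deriv)
qed

lemma pd_cmult: "f \<in> pf \<Longrightarrow> pd (\<lambda>q. a * f q) c p = a * pd f c p"
  using pd_mult[OF pf_const[of a], of f c p] by simp

lemma pd_sum: "finite S \<Longrightarrow> (\<And>m. m \<in> S \<Longrightarrow> f m \<in> pf) \<Longrightarrow>
   pd (\<lambda>q. \<Sum>m\<in>S. f m q) c p = (\<Sum>m\<in>S. pd (f m) c p)"
proof (induction S rule: finite_induct)
  case empty then show ?case by simp
next
  case (insert x F)
  have "pd (\<lambda>q. \<Sum>m\<in>insert x F. f m q) c p = pd (\<lambda>q. f x q + (\<Sum>m\<in>F. f m q)) c p"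
    using insert by simp
  also have "\<dots> = pd (f x) c p + pd (\<lambda>q. \<Sum>m\<in>F. f m q) c p"
    using insert by (intro pd_add pf_sum) auto
  finally show ?case using insert by simp
qed

lemma finite_coords[simp]: "finite (coords n d)"
proof -
  have "coords n d = (\<lambda>(i,j). Xc i j) ` ({..<n}\<times>{..<n}) \<union> (\<lambda>(i,j). Zc i j) ` ({..<n}\<times>{..<n}) \<union>
      (\<lambda>(a,j). Vc a j) ` ({1..d}\<times>{..<n}) \<union> (\<lambda>(a,j). Wc a j) ` ({1..d}\<times>{..<n})"
    unfolding coords_def by auto
  then show ?thesis by simp
qed

lemma qpb_mult1: "f \<in> pf \<Longrightarrow> g \<in> pf \<Longrightarrow>
  qpb n d (\<lambda>q. f q * g q) h p = f p * qpb n d g h p + g p * qpb n d f h p"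
  unfolding qpb_def
  by (simp add: pd_mult sum_distrib_left sum.distrib algebra_simps)

lemma qpb_mult2: "f \<in> pf \<Longrightarrow> g \<in> pf \<Longrightarrow>
  qpb n d h (\<lambda>q. f q * g q) p = f p * qpb n d h g p + g p * qpb n d h f p"
  unfolding qpb_def
  by (simp add: pd_mult sum_distrib_left sum.distrib algebra_simps)

lemma qpb_add1: "f \<in> pf \<Longrightarrow> g \<in> pf \<Longrightarrow>
  qpb n d (\<lambda>q. f q + g q) h p = qpb n d f h p + qpb n d g h p"
  unfolding qpb_def
  by (simp add: pd_add ring_distribs sum.distrib)

lemma qpb_add2: "f \<in> pf \<Longrightarrow> g \<in> pf \<Longrightarrow>
  qpb n d h (\<lambda>q. f q + g q) p = qpb n d h f p + qpb n d h g p"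
  unfolding qpb_def
  by (simp add: pd_add ring_distribs sum.distrib)

lemma qpb_const1[simp]: "qpb n d (\<lambda>q. c) h p = 0"
  unfolding qpb_def by simp
lemma qpb_const2[simp]: "qpb n d h (\<lambda>q. c) p = 0"
  unfolding qpb_def by simp

lemma qpb_sum1: "finite S \<Longrightarrow> (\<And>m. m \<in> S \<Longrightarrow> f m \<in> pf) \<Longrightarrow>
  qpb n d (\<lambda>q. \<Sum>m\<in>S. f m q) h p = (\<Sum>m\<in>S. qpb n d (f m) h p)"
proof (induction S rule: finite_induct)
  case empty then show ?case by simp
next
  case (insert x F)
  have "qpb n d (\<lambda>q. \<Sum>m\<in>insert x F. f m q) h p = qpb n d (\<lambda>q. f x q + (\<Sum>m\<in>F. f m q)) h p"
    using insert by simp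
  also have "\<dots> = qpb n d (f x) h p + qpb n d (\<lambda>q. \<Sum>m\<in>F. f m q) h p"
    using insert by (intro qpb_add1 pf_sum) auto
  finally show ?case using insert by simp
qed

lemma qpb_sum2: "finite S \<Longrightarrow> (\<And>m. m \<in> S \<Longrightarrow> f m \<in> pf) \<Longrightarrow>
  qpb n d h (\<lambda>q. \<Sum>m\<in>S. f m q) p = (\<Sum>m\<in>S. qpb n d h (f m) p)"
proof (induction S rule: finite_induct)
  case empty then show ?case by simp
next
  case (insert x F)
  have "qpb n d h (\<lambda>q. \<Sum>m\<in>insert x F. f m q) p = qpb n d h (\<lambda>q. f x q + (\<Sum>m\<in>F. f m q)) p"
    using insert by simp
  also have "\<dots> = qpb n d h (f x) p + qpb n d h (\<lambda>q. \<Sum>m\<in>F. f m q) p"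
    using insert by (intro qpb_add2 pf_sum) auto
  finally show ?case using insert by simp
qed

lemma qpb_cmult1: "f \<in> pf \<Longrightarrow> qpb n d (\<lambda>q. c * f q) h p = c * qpb n d f h p"
  using qpb_mult1[OF pf_const[of c], of f n d h p] by simp
lemma qpb_cmult2: "f \<in> pf \<Longrightarrow> qpb n d h (\<lambda>q. c * f q) p = c * qpb n d h f p"
  using qpb_mult2[OF pf_const[of c], of f n d h p] by simp

lemma qpb_lin1: "finite S \<Longrightarrow> (\<And>a. a \<in> coords n d \<Longrightarrow> pd f a p = (\<Sum>x\<in>S. c x * pd (h x) a p)) \<Longrightarrow>
  qpb n d f g p = (\<Sum>x\<in>S. c x * qpb n d (h x) g p)"
proof -
  assume S: "finite S" and D: "\<And>a. a \<in> coords n d \<Longrightarrow> pd f a p = (\<Sum>x\<in>S. c x * pd (h x) a p)"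
  have "qpb n d f g p = (\<Sum>a\<in>coords n d. \<Sum>b\<in>coords n d. \<Sum>x\<in>S. c x * (pd (h x) a p * pd g b p * cb n p a b))"
    unfolding qpb_def by (intro sum.cong refl) (simp add: D sum_distrib_right mult.assoc)
  also have "\<dots> = (\<Sum>x\<in>S. \<Sum>a\<in>coords n d. \<Sum>b\<in>coords n d. c x * (pd (h x) a p * pd g b p * cb n p a b))"
    by (subst sum.swap, subst (2) sum.swap) (rule refl)
  also have "\<dots> = (\<Sum>x\<in>S. c x * qpb n d (h x) g p)"
    unfolding qpb_def by (simp add: sum_distrib_left)
  finally show ?thesis .
qed

lemma ord_sign_anti: "ord_sign a b = - ord_sign b a"
  unfolding ord_sign_def by auto
lemma kd_sym: "kd a b = kd b a" unfolding kd_def by auto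
lemma cb_antisym: "cb n p b a = - cb n p a b"
proof (cases a; cases b)
  fix i j k l assume "a = Xc i j" "b = Xc k l" then show ?thesis
    by (simp add: cb_def kd_sym algebra_simps)
next
  fix i j k l assume "a = Zc i j" "b = Zc k l" then show ?thesis
    by (simp add: cb_def kd_sym algebra_simps)
next
  fix i j k l assume "a = Vc i j" "b = Vc k l" then show ?thesis
    by (simp add: cb_def ord_sign_anti[of i k] algebra_simps)
next
  fix i j k l assume "a = Wc i j" "b = Wc k l" then show ?thesis
    by (simp add: cb_def ord_sign_anti[of i k] algebra_simps)
qed (simp_all add: cb_def)

lemma qpb_antisym: "qpb n d g f p = - qpb n d f g p"
proof -
  have "qpb n d g f p = (\<Sum>b\<in>coords n d. \<Sum>a\<in>coords n d. pd g b p * pd f a p * cb n p b a)"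
    unfolding qpb_def by simp
  also have "\<dots> = (\<Sum>a\<in>coords n d. \<Sum>b\<in>coords n d. pd g b p * pd f a p * cb n p b a)"
    by (rule sum.swap)
  also have "\<dots> = (\<Sum>a\<in>coords n d. \<Sum>b\<in>coords n d. - (pd f a p * pd g b p * cb n p a b))"
    by (intro sum.cong refl) (subst cb_antisym, simp)
  also have "\<dots> = - qpb n d f g p"
    unfolding qpb_def by (simp add: sum_negf)
  finally show ?thesis .
qed

lemma if1_mult: "(if P then 1 else 0) * (t::complex) = (if P then t else 0)" by simp
lemma if0_mult: "(if P then t else 0) * (u::complex) = (if P then t * u else 0)" by simp

lemma qpb_coord: "x \<in> coords n d \<Longrightarrow> y \<in> coords n d \<Longrightarrow>
   qpb n d (\<lambda>q. q x) (\<lambda>q. q y) p = cb n p x y"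
proof -
  assume x: "x \<in> coords n d" and y: "y \<in> coords n d"
  have "qpb n d (\<lambda>q. q x) (\<lambda>q. q y) p =
    (\<Sum>a\<in>coords n d. if x = a then (\<Sum>b\<in>coords n d. if y = b then cb n p a b else 0) else 0)"
    unfolding qpb_def pd_coord by (intro sum.cong refl) (cases "x = a"; simp add: if1_mult if0_mult)
  also have "\<dots> = cb n p x y" using x y by (simp only: sum.delta' finite_coords if_True)
  finally show ?thesis .
qed

lemma mult_entry: "A \<in> carrier_mat n n \<Longrightarrow> B \<in> carrier_mat n n \<Longrightarrow> i < n \<Longrightarrow> j < n \<Longrightarrow>
   (A * B) $$ (i,j) = (\<Sum>m<n. A $$ (i,m) * B $$ (m,j))"
  by (simp add: scalar_prod_def lessThan_atLeast0 mult.commute)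

definition pmat :: "nat \<Rightarrow> (point \<Rightarrow> complex mat) \<Rightarrow> bool" where
  "pmat n M \<longleftrightarrow> (\<forall>q. M q \<in> carrier_mat n n) \<and> (\<forall>i<n. \<forall>j<n. (\<lambda>q. M q $$ (i,j)) \<in> pf)"

lemma pmat_carrier[simp]: "pmat n M \<Longrightarrow> M q \<in> carrier_mat n n"
  unfolding pmat_def by auto
lemma pmat_dims[simp]: "pmat n M \<Longrightarrow> dim_row (M q) = n" "pmat n M \<Longrightarrow> dim_col (M q) = n"
  unfolding pmat_def carrier_mat_def by auto

lemma pmat_pf: "pmat n M \<Longrightarrow> i < n \<Longrightarrow> j < n \<Longrightarrow> (\<lambda>q. M q $$ (i,j)) \<in> pf"
  unfolding pmat_def by auto

lemma pmat_mult: "pmat n M \<Longrightarrow> pmat n N \<Longrightarrow> pmat n (\<lambda>q. M q * N q)"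
proof -
  assume M: "pmat n M" and N: "pmat n N"
  have "(\<lambda>q. (M q * N q) $$ (i,j)) \<in> pf" if "i < n" "j < n" for i j
  proof -
    have "(\<lambda>q. (M q * N q) $$ (i,j)) = (\<lambda>q. \<Sum>m<n. M q $$ (i,m) * N q $$ (m,j))"
      using M N that by (intro ext mult_entry) auto
    moreover have "(\<lambda>q. \<Sum>m<n. M q $$ (i,m) * N q $$ (m,j)) \<in> pf"
      using M N that by (intro pf_sum pf_mult pmat_pf) auto
    ultimately show ?thesis by simp
  qed
  moreover have "M q * N q \<in> carrier_mat n n" for q
    using pmat_carrier[OF M] pmat_carrier[OF N] by (rule mult_carrier_mat)
  ultimately show ?thesis unfolding pmat_def by auto
qed

lemma pmat_add: "pmat n M \<Longrightarrow> pmat n N \<Longrightarrow> pmat n (\<lambda>q. M q + N q)"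
proof -
  assume M: "pmat n M" and N: "pmat n N"
  have "(\<lambda>q. (M q + N q) $$ (i,j)) \<in> pf" if "i < n" "j < n" for i j
  proof -
    have "(\<lambda>q. (M q + N q) $$ (i,j)) = (\<lambda>q. M q $$ (i,j) + N q $$ (i,j))"
      using M N that by (intro ext) auto
    then show ?thesis using M N that by (simp add: pf_add pmat_pf)
  qed
  moreover have "M q + N q \<in> carrier_mat n n" for q
    using M N by simp
  ultimately show ?thesis unfolding pmat_def by auto
qed

lemma pmat_smult: "pmat n M \<Longrightarrow> pmat n (\<lambda>q. c \<cdot>\<^sub>m M q)"
proof -
  assume M: "pmat n M"
  have "(\<lambda>q. (c \<cdot>\<^sub>m M q) $$ (i,j)) \<in> pf" if "i < n" "j < n" for i j
  proof -
    have "(\<lambda>q. (c \<cdot>\<^sub>m M q) $$ (i,j)) = (\<lambda>q. c * M q $$ (i,j))"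
      using M that by (intro ext) auto
    then show ?thesis using M that by (simp add: pf_mult pf_const pmat_pf)
  qed
  moreover have "c \<cdot>\<^sub>m M q \<in> carrier_mat n n" for q
    using pmat_carrier[OF M] by (rule smult_carrier_mat)
  ultimately show ?thesis unfolding pmat_def by auto
qed

lemma pmat_const: "C \<in> carrier_mat n n \<Longrightarrow> pmat n (\<lambda>q. C)"
  unfolding pmat_def by (auto intro: pf_const)

lemma pmat_pow: "pmat n M \<Longrightarrow> pmat n (\<lambda>q. M q ^\<^sub>m k)"
proof (induction k)
  case 0
  have "(\<lambda>q. M q ^\<^sub>m 0) = (\<lambda>q. 1\<^sub>m n)" using 0 by (intro ext) auto
  then show ?case by (simp add: pmat_const)
next
  case (Suc k)
  then show ?case using pmat_mult[OF Suc.IH Suc.prems] by simp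
qed

definition Em :: "nat \<Rightarrow> nat \<Rightarrow> point \<Rightarrow> (point \<Rightarrow> complex mat) \<Rightarrow> (point \<Rightarrow> complex mat) \<Rightarrow>
   nat \<Rightarrow> nat \<Rightarrow> nat \<Rightarrow> nat \<Rightarrow> complex" where
  "Em n d p M N i j k l = qpb n d (\<lambda>q. M q $$ (i,j)) (\<lambda>q. N q $$ (k,l)) p"

lemma Em_mult1:
  assumes M: "pmat n M" and N: "pmat n N" and K: "pmat n K" and ij: "i < n" "j < n"
  shows "Em n d p (\<lambda>q. M q * N q) K i j k l =
    (\<Sum>m<n. M p $$ (i,m) * Em n d p N K m j k l + Em n d p M K i m k l * N p $$ (m,j))"
proof -
  have "(\<lambda>q. (M q * N q) $$ (i,j)) = (\<lambda>q. \<Sum>m<n. M q $$ (i,m) * N q $$ (m,j))"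
    using M N ij by (intro ext mult_entry) auto
  note e = this
  have "Em n d p (\<lambda>q. M q * N q) K i j k l =
     (\<Sum>m<n. qpb n d (\<lambda>q. M q $$ (i,m) * N q $$ (m,j)) (\<lambda>q. K q $$ (k,l)) p)"
    unfolding Em_def e using M N ij by (subst qpb_sum1) (auto intro!: pf_mult pmat_pf)
  also have "\<dots> = (\<Sum>m<n. M p $$ (i,m) * Em n d p N K m j k l + Em n d p M K i m k l * N p $$ (m,j))"
    unfolding Em_def using M N ij
    by (intro sum.cong refl) (simp add: qpb_mult1[of "\<lambda>q. M q $$ (i, _)" "\<lambda>q. N q $$ (_, j)"] pmat_pf mult.commute)
  finally show ?thesis .
qed

lemma Em_mult2:
  assumes M: "pmat n M" and N: "pmat n N" and K: "pmat n K" and kl: "k < n" "l < n"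
  shows "Em n d p K (\<lambda>q. M q * N q) i j k l =
    (\<Sum>m<n. M p $$ (k,m) * Em n d p K N i j m l + Em n d p K M i j k m * N p $$ (m,l))"
proof -
  have "(\<lambda>q. (M q * N q) $$ (k,l)) = (\<lambda>q. \<Sum>m<n. M q $$ (k,m) * N q $$ (m,l))"
    using M N kl by (intro ext mult_entry) auto
  note e = this
  have "Em n d p K (\<lambda>q. M q * N q) i j k l =
     (\<Sum>m<n. qpb n d (\<lambda>q. K q $$ (i,j)) (\<lambda>q. M q $$ (k,m) * N q $$ (m,l)) p)"
    unfolding Em_def e using M N kl by (subst qpb_sum2) (auto intro!: pf_mult pmat_pf)
  also have "\<dots> = (\<Sum>m<n. M p $$ (k,m) * Em n d p K N i j m l + Em n d p K M i j k m * N p $$ (m,l))"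
    unfolding Em_def using M N kl
    by (intro sum.cong refl) (simp add: qpb_mult2[of "\<lambda>q. M q $$ (k, _)" "\<lambda>q. N q $$ (_, l)"] pmat_pf mult.commute)
  finally show ?thesis .
qed

lemma Em_add1:
  assumes M: "pmat n M" and N: "pmat n N" and ij: "i < n" "j < n"
  shows "Em n d p (\<lambda>q. M q + N q) K i j k l = Em n d p M K i j k l + Em n d p N K i j k l"
proof -
  have "(\<lambda>q. (M q + N q) $$ (i,j)) = (\<lambda>q. M q $$ (i,j) + N q $$ (i,j))"
    using M N ij by (intro ext) auto
  then show ?thesis unfolding Em_def using M N ij by (simp add: qpb_add1 pmat_pf)
qed

lemma Em_add2:
  assumes M: "pmat n M" and N: "pmat n N" and kl: "k < n" "l < n"
  shows "Em n d p K (\<lambda>q. M q + N q) i j k l = Em n d p K M i j k l + Em n d p K N i j k l"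
proof -
  have "(\<lambda>q. (M q + N q) $$ (k,l)) = (\<lambda>q. M q $$ (k,l) + N q $$ (k,l))"
    using M N kl by (intro ext) auto
  then show ?thesis unfolding Em_def using M N kl by (simp add: qpb_add2 pmat_pf)
qed

lemma Em_smult1:
  assumes M: "pmat n M" and ij: "i < n" "j < n"
  shows "Em n d p (\<lambda>q. c \<cdot>\<^sub>m M q) K i j k l = c * Em n d p M K i j k l"
proof -
  have "(\<lambda>q. (c \<cdot>\<^sub>m M q) $$ (i,j)) = (\<lambda>q. c * M q $$ (i,j))"
    using M ij by (intro ext) auto
  then show ?thesis unfolding Em_def using M ij by (simp add: qpb_cmult1 pmat_pf)
qed

lemma Em_smult2:
  assumes M: "pmat n M" and kl: "k < n" "l < n"
  shows "Em n d p K (\<lambda>q. c \<cdot>\<^sub>m M q) i j k l = c * Em n d p K M i j k l"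
proof -
  have "(\<lambda>q. (c \<cdot>\<^sub>m M q) $$ (k,l)) = (\<lambda>q. c * M q $$ (k,l))"
    using M kl by (intro ext) auto
  then show ?thesis unfolding Em_def using M kl by (simp add: qpb_cmult2 pmat_pf)
qed

lemma Em_const1: "Em n d p (\<lambda>q. C) K i j k l = 0"
  unfolding Em_def by simp
lemma Em_const2: "Em n d p K (\<lambda>q. C) i j k l = 0"
  unfolding Em_def by simp

lemma Em_swap: "Em n d p N M i j k l = - Em n d p M N k l i j"
  unfolding Em_def by (rule qpb_antisym)

type_synonym tlist = "(complex \<times> complex mat \<times> complex mat) list"

fun tv :: "tlist \<Rightarrow> nat \<Rightarrow> nat \<Rightarrow> nat \<Rightarrow> nat \<Rightarrow> complex" where
  "tv [] i j k l = 0"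
| "tv ((c,U,Y)#xs) i j k l = c * U $$ (k,j) * Y $$ (i,l) + tv xs i j k l"

fun okl :: "nat \<Rightarrow> tlist \<Rightarrow> bool" where
  "okl n [] = True"
| "okl n ((c,U,Y)#xs) = (U \<in> carrier_mat n n \<and> Y \<in> carrier_mat n n \<and> okl n xs)"

lemma okl_append[simp]: "okl n (xs @ ys) \<longleftrightarrow> okl n xs \<and> okl n ys"
  by (induction xs rule: okl.induct) auto

definition mL1 :: "complex mat \<Rightarrow> tlist \<Rightarrow> tlist" where "mL1 M xs = map (\<lambda>(c,U,Y). (c, U, M * Y)) xs"
definition mR1 :: "tlist \<Rightarrow> complex mat \<Rightarrow> tlist" where "mR1 xs N = map (\<lambda>(c,U,Y). (c, U * N, Y)) xs"
definition mL2 :: "complex mat \<Rightarrow> tlist \<Rightarrow> tlist" where "mL2 M xs = map (\<lambda>(c,U,Y). (c, M * U, Y)) xs"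
definition mR2 :: "tlist \<Rightarrow> complex mat \<Rightarrow> tlist" where "mR2 xs N = map (\<lambda>(c,U,Y). (c, U, Y * N)) xs"
definition msw :: "tlist \<Rightarrow> tlist" where "msw xs = map (\<lambda>(c,U,Y). (- c, Y, U)) xs"
definition msc :: "complex \<Rightarrow> tlist \<Rightarrow> tlist" where "msc a xs = map (\<lambda>(c,U,Y). (a * c, U, Y)) xs"

lemma mops_simps[simp]:
  "mL1 M [] = []" "mL1 M ((c,U,Y)#xs) = (c, U, M * Y) # mL1 M xs"
  "mR1 [] N = []" "mR1 ((c,U,Y)#xs) N = (c, U * N, Y) # mR1 xs N"
  "mL2 M [] = []" "mL2 M ((c,U,Y)#xs) = (c, M * U, Y) # mL2 M xs"
  "mR2 [] N = []" "mR2 ((c,U,Y)#xs) N = (c, U, Y * N) # mR2 xs N"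
  "msw [] = []" "msw ((c,U,Y)#xs) = (- c, Y, U) # msw xs"
  "msc a [] = []" "msc a ((c,U,Y)#xs) = (a * c, U, Y) # msc a xs"
  by (simp_all add: mL1_def mR1_def mL2_def mR2_def msw_def msc_def)

lemma tv_append[simp]: "tv (xs @ ys) i j k l = tv xs i j k l + tv ys i j k l"
  by (induction xs rule: okl.induct) auto

lemma okl_ops[simp]:
  "okl n xs \<Longrightarrow> M \<in> carrier_mat n n \<Longrightarrow> okl n (mL1 M xs)"
  "okl n xs \<Longrightarrow> M \<in> carrier_mat n n \<Longrightarrow> okl n (mR1 xs M)"
  "okl n xs \<Longrightarrow> M \<in> carrier_mat n n \<Longrightarrow> okl n (mL2 M xs)"
  "okl n xs \<Longrightarrow> M \<in> carrier_mat n n \<Longrightarrow> okl n (mR2 xs M)"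
  "okl n xs \<Longrightarrow> okl n (msw xs)"
  "okl n xs \<Longrightarrow> okl n (msc a xs)"
  by (induction xs rule: okl.induct) auto

lemma tv_L1: "okl n xs \<Longrightarrow> M \<in> carrier_mat n n \<Longrightarrow> i < n \<Longrightarrow> l < n \<Longrightarrow>
   (\<Sum>m<n. M $$ (i,m) * tv xs m j k l) = tv (mL1 M xs) i j k l"
proof (induction xs)
  case Nil then show ?case by simp
next
  case (Cons x xs)
  obtain c U Y where x: "x = (c,U,Y)" by (cases x)
  have UY: "U \<in> carrier_mat n n" "Y \<in> carrier_mat n n" "okl n xs" using Cons.prems(1) x by auto
  have "(\<Sum>m<n. M $$ (i,m) * tv (x#xs) m j k l) =
     c * U $$ (k,j) * (\<Sum>m<n. M $$ (i,m) * Y $$ (m,l)) + (\<Sum>m<n. M $$ (i,m) * tv xs m j k l)"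
    by (simp add: x sum.distrib sum_distrib_left algebra_simps)
  also have "\<dots> = c * U $$ (k,j) * (M * Y) $$ (i,l) + tv (mL1 M xs) i j k l"
    using Cons.IH Cons.prems UY x by (simp del: index_mult_mat add: mult_entry)
  finally show ?case by (simp add: x)
qed

lemma tv_R1: "okl n xs \<Longrightarrow> N \<in> carrier_mat n n \<Longrightarrow> k < n \<Longrightarrow> j < n \<Longrightarrow>
   (\<Sum>m<n. tv xs i m k l * N $$ (m,j)) = tv (mR1 xs N) i j k l"
proof (induction xs)
  case Nil then show ?case by simp
next
  case (Cons x xs)
  obtain c U Y where x: "x = (c,U,Y)" by (cases x)
  have UY: "U \<in> carrier_mat n n" "Y \<in> carrier_mat n n" "okl n xs" using Cons.prems(1) x by auto
  have "(\<Sum>m<n. tv (x#xs) i m k l * N $$ (m,j)) =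
     c * Y $$ (i,l) * (\<Sum>m<n. U $$ (k,m) * N $$ (m,j)) + (\<Sum>m<n. tv xs i m k l * N $$ (m,j))"
    by (simp add: x sum.distrib sum_distrib_left algebra_simps)
  also have "\<dots> = c * Y $$ (i,l) * (U * N) $$ (k,j) + tv (mR1 xs N) i j k l"
    using Cons.IH Cons.prems UY x by (simp del: index_mult_mat add: mult_entry)
  finally show ?case by (simp add: x algebra_simps)
qed

lemma tv_L2: "okl n xs \<Longrightarrow> M \<in> carrier_mat n n \<Longrightarrow> k < n \<Longrightarrow> j < n \<Longrightarrow>
   (\<Sum>m<n. M $$ (k,m) * tv xs i j m l) = tv (mL2 M xs) i j k l"
proof (induction xs)
  case Nil then show ?case by simp
next
  case (Cons x xs)
  obtain c U Y where x: "x = (c,U,Y)" by (cases x)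
  have UY: "U \<in> carrier_mat n n" "Y \<in> carrier_mat n n" "okl n xs" using Cons.prems(1) x by auto
  have "(\<Sum>m<n. M $$ (k,m) * tv (x#xs) i j m l) =
     c * Y $$ (i,l) * (\<Sum>m<n. M $$ (k,m) * U $$ (m,j)) + (\<Sum>m<n. M $$ (k,m) * tv xs i j m l)"
    by (simp add: x sum.distrib sum_distrib_left algebra_simps)
  also have "\<dots> = c * Y $$ (i,l) * (M * U) $$ (k,j) + tv (mL2 M xs) i j k l"
    using Cons.IH Cons.prems UY x by (simp del: index_mult_mat add: mult_entry)
  finally show ?case by (simp add: x algebra_simps)
qed

lemma tv_R2: "okl n xs \<Longrightarrow> N \<in> carrier_mat n n \<Longrightarrow> i < n \<Longrightarrow> l < n \<Longrightarrow>
   (\<Sum>m<n. tv xs i j k m * N $$ (m,l)) = tv (mR2 xs N) i j k l"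
proof (induction xs)
  case Nil then show ?case by simp
next
  case (Cons x xs)
  obtain c U Y where x: "x = (c,U,Y)" by (cases x)
  have UY: "U \<in> carrier_mat n n" "Y \<in> carrier_mat n n" "okl n xs" using Cons.prems(1) x by auto
  have "(\<Sum>m<n. tv (x#xs) i j k m * N $$ (m,l)) =
     c * U $$ (k,j) * (\<Sum>m<n. Y $$ (i,m) * N $$ (m,l)) + (\<Sum>m<n. tv xs i j k m * N $$ (m,l))"
    by (simp add: x sum.distrib sum_distrib_left algebra_simps)
  also have "\<dots> = c * U $$ (k,j) * (Y * N) $$ (i,l) + tv (mR2 xs N) i j k l"
    using Cons.IH Cons.prems UY x by (simp del: index_mult_mat add: mult_entry)
  finally show ?case by (simp add: x)
qed

lemma tv_swap: "- tv xs k l i j = tv (msw xs) i j k l"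
  by (induction xs rule: okl.induct) (auto simp: algebra_simps)

lemma tv_msc: "a * tv xs i j k l = tv (msc a xs) i j k l"
  by (induction xs rule: okl.induct) (auto simp: algebra_simps)

definition EmIs :: "nat \<Rightarrow> nat \<Rightarrow> point \<Rightarrow> (point \<Rightarrow> complex mat) \<Rightarrow> (point \<Rightarrow> complex mat) \<Rightarrow> tlist \<Rightarrow> bool" where
  "EmIs n d p M N xs \<longleftrightarrow> (\<forall>i<n. \<forall>j<n. \<forall>k<n. \<forall>l<n. Em n d p M N i j k l = tv xs i j k l)"

lemma EmIs_mult1:
  assumes M: "pmat n M" and N: "pmat n N" and K: "pmat n K"
    and E1: "EmIs n d p N K xs" and E2: "EmIs n d p M K ys" and ok: "okl n xs" "okl n ys"
  shows "EmIs n d p (\<lambda>q. M q * N q) K (mL1 (M p) xs @ mR1 ys (N p))"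
  unfolding EmIs_def
proof (intro allI impI)
  fix i j k l assume ijkl: "i < n" "j < n" "k < n" "l < n"
  have "Em n d p (\<lambda>q. M q * N q) K i j k l =
    (\<Sum>m<n. M p $$ (i,m) * tv xs m j k l) + (\<Sum>m<n. tv ys i m k l * N p $$ (m,j))"
    using Em_mult1[OF M N K ijkl(1,2)] E1 E2 ijkl unfolding EmIs_def
    by (simp add: sum.distrib)
  also have "\<dots> = tv (mL1 (M p) xs @ mR1 ys (N p)) i j k l"
    using ok ijkl M N by (simp add: tv_L1 tv_R1)
  finally show "Em n d p (\<lambda>q. M q * N q) K i j k l = tv (mL1 (M p) xs @ mR1 ys (N p)) i j k l" .
qed

lemma EmIs_mult2:
  assumes M: "pmat n M" and N: "pmat n N" and K: "pmat n K"
    and E1: "EmIs n d p K N xs" and E2: "EmIs n d p K M ys" and ok: "okl n xs" "okl n ys"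
  shows "EmIs n d p K (\<lambda>q. M q * N q) (mL2 (M p) xs @ mR2 ys (N p))"
  unfolding EmIs_def
proof (intro allI impI)
  fix i j k l assume ijkl: "i < n" "j < n" "k < n" "l < n"
  have "Em n d p K (\<lambda>q. M q * N q) i j k l =
    (\<Sum>m<n. M p $$ (k,m) * tv xs i j m l) + (\<Sum>m<n. tv ys i j k m * N p $$ (m,l))"
    using Em_mult2[OF M N K ijkl(3,4)] E1 E2 ijkl unfolding EmIs_def
    by (simp add: sum.distrib)
  also have "\<dots> = tv (mL2 (M p) xs @ mR2 ys (N p)) i j k l"
    using ok ijkl M N by (simp add: tv_L2 tv_R2)
  finally show "Em n d p K (\<lambda>q. M q * N q) i j k l = tv (mL2 (M p) xs @ mR2 ys (N p)) i j k l" .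
qed

lemma EmIs_add1: "pmat n M \<Longrightarrow> pmat n N \<Longrightarrow> EmIs n d p M K xs \<Longrightarrow> EmIs n d p N K ys \<Longrightarrow>
  EmIs n d p (\<lambda>q. M q + N q) K (xs @ ys)"
  unfolding EmIs_def by (simp add: Em_add1)
lemma EmIs_add2: "pmat n M \<Longrightarrow> pmat n N \<Longrightarrow> EmIs n d p K M xs \<Longrightarrow> EmIs n d p K N ys \<Longrightarrow>
  EmIs n d p K (\<lambda>q. M q + N q) (xs @ ys)"
  unfolding EmIs_def by (simp add: Em_add2)
lemma EmIs_smult1: "pmat n M \<Longrightarrow> EmIs n d p M K xs \<Longrightarrow> EmIs n d p (\<lambda>q. c \<cdot>\<^sub>m M q) K (msc c xs)"
  unfolding EmIs_def by (simp add: Em_smult1 tv_msc)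
lemma EmIs_smult2: "pmat n M \<Longrightarrow> EmIs n d p K M xs \<Longrightarrow> EmIs n d p K (\<lambda>q. c \<cdot>\<^sub>m M q) (msc c xs)"
  unfolding EmIs_def by (simp add: Em_smult2 tv_msc)
lemma EmIs_const1: "EmIs n d p (\<lambda>q. C) K []"
  unfolding EmIs_def by (simp add: Em_const1)
lemma EmIs_const2: "EmIs n d p K (\<lambda>q. C) []"
  unfolding EmIs_def by (simp add: Em_const2)
lemma EmIs_swap: "EmIs n d p M N xs \<Longrightarrow> EmIs n d p N M (msw xs)"
  unfolding EmIs_def by (metis Em_swap tv_swap)
lemma EmIs_cong: "EmIs n d p M N xs \<Longrightarrow>
   (\<And>i j k l. i < n \<Longrightarrow> j < n \<Longrightarrow> k < n \<Longrightarrow> l < n \<Longrightarrow> tv xs i j k l = tv ys i j k l) \<Longrightarrow> EmIs n d p M N ys"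
  unfolding EmIs_def by auto

lemma Zmat_carrier[simp]: "Zmat n q \<in> carrier_mat n n" unfolding Zmat_def by simp
lemma Zmat_entry[simp]: "i < n \<Longrightarrow> j < n \<Longrightarrow> Zmat n q $$ (i,j) = q (Zc i j)"
  unfolding Zmat_def by simp
lemma Amat_carrier[simp]: "Amat n q a \<in> carrier_mat n n"
  unfolding Amat_def Wcol_def Vrow_def carrier_mat_def by simp
lemma Amat_entry[simp]: "i < n \<Longrightarrow> j < n \<Longrightarrow> Amat n q a $$ (i,j) = kd i j + q (Wc a i) * q (Vc a j)"
  unfolding Amat_def Wcol_def Vrow_def kd_def by (simp add: scalar_prod_def)

lemma one_entry: "i < n \<Longrightarrow> j < n \<Longrightarrow> (1\<^sub>m n :: complex mat) $$ (i,j) = kd i j"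
  unfolding kd_def by simp

lemma pmat_Z: "pmat n (Zmat n)"
proof -
  have "(\<lambda>q. Zmat n q $$ (i,j)) = (\<lambda>q. q (Zc i j))" if "i < n" "j < n" for i j
    using that by auto
  then show ?thesis unfolding pmat_def by (auto intro: pf_coord)
qed

lemma pmat_A: "pmat n (\<lambda>q. Amat n q a)"
proof -
  have "(\<lambda>q. Amat n q a $$ (i,j)) = (\<lambda>q. kd i j + q (Wc a i) * q (Vc a j))" if "i < n" "j < n" for i j
    using that by auto
  then show ?thesis unfolding pmat_def by (auto intro!: pf_add pf_mult pf_const pf_coord)
qed

lemma coordsI: "i < n \<Longrightarrow> j < n \<Longrightarrow> Zc i j \<in> coords n d"
  "a \<in> {1..d} \<Longrightarrow> j < n \<Longrightarrow> Vc a j \<in> coords n d"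
  "a \<in> {1..d} \<Longrightarrow> j < n \<Longrightarrow> Wc a j \<in> coords n d"
  unfolding coords_def by auto

lemma ZZ_entry: "i < n \<Longrightarrow> l < n \<Longrightarrow> (Zmat n p * Zmat n p) $$ (i,l) = (\<Sum>m<n. p (Zc i m) * p (Zc m l))"
  by (subst mult_entry) (auto intro!: sum.cong)

lemma B_ZZ: "EmIs n d p (Zmat n) (Zmat n)
   [(1/2, 1\<^sub>m n, Zmat n p * Zmat n p), (-1/2, Zmat n p * Zmat n p, 1\<^sub>m n)]"
  unfolding EmIs_def
proof (intro allI impI)
  fix i j k l assume a: "i < n" "j < n" "k < n" "l < n"
  have "Em n d p (Zmat n) (Zmat n) i j k l = qpb n d (\<lambda>q. q (Zc i j)) (\<lambda>q. q (Zc k l)) p"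
    unfolding Em_def using a by simp
  also have "\<dots> = cb n p (Zc i j) (Zc k l)" using a by (simp add: qpb_coord coordsI)
  also have "\<dots> = tv [(1/2, 1\<^sub>m n, Zmat n p * Zmat n p), (-1/2, Zmat n p * Zmat n p, 1\<^sub>m n)] i j k l"
    using a by (simp add: cb_def ent_def ZZ_entry kd_def algebra_simps)
  finally show "Em n d p (Zmat n) (Zmat n) i j k l = tv [(1/2, 1\<^sub>m n, Zmat n p * Zmat n p), (-1/2, Zmat n p * Zmat n p, 1\<^sub>m n)] i j k l" .
qed

lemma mult_if1: "(t::complex) * (if P then 1 else 0) = (if P then t else 0)" by simp
lemma sum_kd1: "k < n \<Longrightarrow> (\<Sum>m<n. kd k m * f m) = (f k :: complex)"
  unfolding kd_def by (simp only: if1_mult) simp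
lemma sum_kd2: "k < n \<Longrightarrow> (\<Sum>m<n. f m * kd m k) = (f k :: complex)"
  unfolding kd_def by (simp only: mult_if1) simp

lemma AZ_entry: "k < n \<Longrightarrow> j < n \<Longrightarrow> (Amat n p a * Zmat n p) $$ (k,j) =
   p (Zc k j) + p (Wc a k) * (\<Sum>m<n. p (Vc a m) * p (Zc m j))"
proof -
  assume a: "k < n" "j < n"
  have "(Amat n p a * Zmat n p) $$ (k,j) = (\<Sum>m<n. (kd k m + p (Wc a k) * p (Vc a m)) * p (Zc m j))"
    using a by (subst mult_entry) (auto intro!: sum.cong)
  also have "\<dots> = (\<Sum>m<n. kd k m * p (Zc m j)) + p (Wc a k) * (\<Sum>m<n. p (Vc a m) * p (Zc m j))"
    by (simp add: algebra_simps sum.distrib sum_distrib_left)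
  also have "\<dots> = p (Zc k j) + p (Wc a k) * (\<Sum>m<n. p (Vc a m) * p (Zc m j))"
    using a by (simp add: sum_kd1)
  finally show ?thesis .
qed

lemma ZA_entry: "i < n \<Longrightarrow> l < n \<Longrightarrow> (Zmat n p * Amat n p a) $$ (i,l) =
   p (Zc i l) + (\<Sum>m<n. p (Zc i m) * p (Wc a m)) * p (Vc a l)"
proof -
  assume a: "i < n" "l < n"
  have "(Zmat n p * Amat n p a) $$ (i,l) = (\<Sum>m<n. p (Zc i m) * (kd m l + p (Wc a m) * p (Vc a l)))"
    using a by (subst mult_entry) (auto intro!: sum.cong)
  also have "\<dots> = (\<Sum>m<n. p (Zc i m) * kd m l) + (\<Sum>m<n. p (Zc i m) * p (Wc a m)) * p (Vc a l)"
    by (simp add: algebra_simps sum.distrib sum_distrib_right sum_distrib_left)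
  also have "\<dots> = p (Zc i l) + (\<Sum>m<n. p (Zc i m) * p (Wc a m)) * p (Vc a l)"
    using a by (simp add: sum_kd2)
  finally show ?thesis .
qed

lemma AA_entry: "i < n \<Longrightarrow> l < n \<Longrightarrow> (Amat n p a * Amat n p b) $$ (i,l) =
   kd i l + p (Wc b i) * p (Vc b l) + p (Wc a i) * p (Vc a l) +
   p (Wc a i) * (\<Sum>m<n. p (Vc a m) * p (Wc b m)) * p (Vc b l)"
proof -
  assume a: "i < n" "l < n"
  have "(Amat n p a * Amat n p b) $$ (i,l) =
     (\<Sum>m<n. (kd i m + p (Wc a i) * p (Vc a m)) * (kd m l + p (Wc b m) * p (Vc b l)))"
    using a by (subst mult_entry) (auto intro!: sum.cong)
  also have "\<dots> = (\<Sum>m<n. kd i m * kd m l) + (\<Sum>m<n. kd i m * (p (Wc b m) * p (Vc b l)))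
     + (\<Sum>m<n. p (Wc a i) * p (Vc a m) * kd m l)
     + p (Wc a i) * (\<Sum>m<n. p (Vc a m) * p (Wc b m)) * p (Vc b l)"
    by (simp add: algebra_simps sum.distrib sum_distrib_left sum_distrib_right)
  also have "\<dots> = kd i l + p (Wc b i) * p (Vc b l) + p (Wc a i) * p (Vc a l) +
   p (Wc a i) * (\<Sum>m<n. p (Vc a m) * p (Wc b m)) * p (Vc b l)"
    using a by (simp add: sum_kd1 sum_kd2)
  finally show ?thesis .
qed

lemma B_ZA: assumes ad: "a \<in> {1..d}"
  shows "EmIs n d p (Zmat n) (\<lambda>q. Amat n q a)
   [(1/2, Amat n p a * Zmat n p, 1\<^sub>m n), (1/2, 1\<^sub>m n, Zmat n p * Amat n p a),
    (-1/2, Amat n p a, Zmat n p), (-1/2, Zmat n p, Amat n p a)]"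
  unfolding EmIs_def
proof (intro allI impI)
  fix i j k l assume a: "i < n" "j < n" "k < n" "l < n"
  have "Em n d p (Zmat n) (\<lambda>q. Amat n q a) i j k l =
     qpb n d (\<lambda>q. q (Zc i j)) (\<lambda>q. kd k l + q (Wc a k) * q (Vc a l)) p"
    unfolding Em_def using a by simp
  also have "\<dots> = qpb n d (\<lambda>q. q (Zc i j)) (\<lambda>q. q (Wc a k) * q (Vc a l)) p"
    by (subst qpb_add2) (auto intro!: pf_mult pf_coord pf_const)
  also have "\<dots> = p (Wc a k) * cb n p (Zc i j) (Vc a l) + p (Vc a l) * cb n p (Zc i j) (Wc a k)"
    using a ad by (subst qpb_mult2) (auto intro!: pf_coord simp: qpb_coord coordsI)
  also have "\<dots> = tv [(1/2, Amat n p a * Zmat n p, 1\<^sub>m n), (1/2, 1\<^sub>m n, Zmat n p * Amat n p a),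
    (-1/2, Amat n p a, Zmat n p), (-1/2, Zmat n p, Amat n p a)] i j k l"
    using a by (simp del: index_one_mat add: cb_def AZ_entry ZA_entry one_entry algebra_simps)
  finally show "Em n d p (Zmat n) (\<lambda>q. Amat n q a) i j k l = tv [(1/2, Amat n p a * Zmat n p, 1\<^sub>m n), (1/2, 1\<^sub>m n, Zmat n p * Amat n p a),
    (-1/2, Amat n p a, Zmat n p), (-1/2, Zmat n p, Amat n p a)] i j k l" .
qed

lemma Em_AA_base: assumes ad: "a \<in> {1..d}" "b \<in> {1..d}" and ijkl: "i < n" "j < n" "k < n" "l < n"
  shows "Em n d p (\<lambda>q. Amat n q a) (\<lambda>q. Amat n q b) i j k l =
    p (Wc a i) * (p (Wc b k) * cb n p (Vc a j) (Vc b l) + p (Vc b l) * cb n p (Vc a j) (Wc b k)) +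
    p (Vc a j) * (p (Wc b k) * cb n p (Wc a i) (Vc b l) + p (Vc b l) * cb n p (Wc a i) (Wc b k))"
proof -
  have "Em n d p (\<lambda>q. Amat n q a) (\<lambda>q. Amat n q b) i j k l =
     qpb n d (\<lambda>q. kd i j + q (Wc a i) * q (Vc a j)) (\<lambda>q. kd k l + q (Wc b k) * q (Vc b l)) p"
    unfolding Em_def using ijkl by simp
  also have "\<dots> = qpb n d (\<lambda>q. q (Wc a i) * q (Vc a j)) (\<lambda>q. q (Wc b k) * q (Vc b l)) p"
    by (subst qpb_add1, (auto intro!: pf_mult pf_coord pf_const)[2],
        subst qpb_add2, (auto intro!: pf_mult pf_coord pf_const)[2]) simp
  also have "\<dots> = p (Wc a i) * qpb n d (\<lambda>q. q (Vc a j)) (\<lambda>q. q (Wc b k) * q (Vc b l)) p +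
      p (Vc a j) * qpb n d (\<lambda>q. q (Wc a i)) (\<lambda>q. q (Wc b k) * q (Vc b l)) p"
    by (subst qpb_mult1) (auto intro!: pf_coord)
  also have "\<dots> = p (Wc a i) * (p (Wc b k) * cb n p (Vc a j) (Vc b l) + p (Vc b l) * cb n p (Vc a j) (Wc b k)) +
    p (Vc a j) * (p (Wc b k) * cb n p (Wc a i) (Vc b l) + p (Vc b l) * cb n p (Wc a i) (Wc b k))"
    using ad ijkl by (simp add: qpb_mult2 pf_coord qpb_coord coordsI)
  finally show ?thesis .
qed

lemma B_AA: assumes ad: "a \<in> {1..d}"
  shows "EmIs n d p (\<lambda>q. Amat n q a) (\<lambda>q. Amat n q a)
   [(1/2, 1\<^sub>m n, Amat n p a * Amat n p a), (-1/2, Amat n p a * Amat n p a, 1\<^sub>m n)]"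
  unfolding EmIs_def
proof (intro allI impI)
  fix i j k l assume a: "i < n" "j < n" "k < n" "l < n"
  have kk: "kd a a = 1" "ord_sign a a = 0" unfolding kd_def ord_sign_def by auto
  show "Em n d p (\<lambda>q. Amat n q a) (\<lambda>q. Amat n q a) i j k l = tv
   [(1/2, 1\<^sub>m n, Amat n p a * Amat n p a), (-1/2, Amat n p a * Amat n p a, 1\<^sub>m n)] i j k l"
    using a unfolding Em_AA_base[OF ad ad a]
    by (simp del: index_one_mat add: cb_def AA_entry one_entry kk algebra_simps)
qed

lemma B_AAx: assumes ad: "a \<in> {1..d}" "b \<in> {1..d}" and ba: "b < a"
  shows "EmIs n d p (\<lambda>q. Amat n q a) (\<lambda>q. Amat n q b)
   [(1/2, Amat n p b, Amat n p a), (1/2, Amat n p a, Amat n p b),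
    (-1/2, 1\<^sub>m n, Amat n p a * Amat n p b), (-1/2, Amat n p b * Amat n p a, 1\<^sub>m n)]"
  unfolding EmIs_def
proof (intro allI impI)
  fix i j k l assume a: "i < n" "j < n" "k < n" "l < n"
  have kk: "kd a b = 0" "kd b a = 0" "ord_sign b a = 1" "ord_sign a b = -1"
    using ba unfolding kd_def ord_sign_def by auto
  show "Em n d p (\<lambda>q. Amat n q a) (\<lambda>q. Amat n q b) i j k l = tv
   [(1/2, Amat n p b, Amat n p a), (1/2, Amat n p a, Amat n p b),
    (-1/2, 1\<^sub>m n, Amat n p a * Amat n p b), (-1/2, Amat n p b * Amat n p a, 1\<^sub>m n)] i j k l"
    using a unfolding Em_AA_base[OF ad a]
    by (simp del: index_one_mat add: cb_def AA_entry one_entry kk algebra_simps add_divide_distrib)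
qed

lemma mult_carrier_nn[simp]: "A \<in> carrier_mat n n \<Longrightarrow> B \<in> carrier_mat n n \<Longrightarrow> A * B \<in> carrier_mat n n"
  by (rule mult_carrier_mat)

definition Af :: "nat \<Rightarrow> nat \<Rightarrow> point \<Rightarrow> complex mat" where
  "Af n m q = mprod n (map (\<lambda>a. Amat n q a) (rev [1..<m+1]))"

lemma Af_0: "Af n 0 = (\<lambda>q. 1\<^sub>m n)"
  unfolding Af_def mprod_def by auto

lemma Af_Suc: "Af n (Suc m) = (\<lambda>q. Amat n q (Suc m) * Af n m q)"
  unfolding Af_def mprod_def by auto

lemma Af_carrier[simp]: "Af n m q \<in> carrier_mat n n"
  by (induction m) (auto simp: Af_0 Af_Suc)

lemma pmat_Af: "pmat n (Af n m)"
proof (induction m)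
  case 0 then show ?case by (simp add: Af_0 pmat_const)
next
  case (Suc m) then show ?case by (simp add: Af_Suc pmat_mult pmat_A)
qed

definition LP1 :: "nat \<Rightarrow> point \<Rightarrow> nat \<Rightarrow> nat \<Rightarrow> tlist" where
  "LP1 n p a m = [(1/2, Af n m p, Amat n p a), (1/2, Amat n p a, Af n m p),
     (-1/2, 1\<^sub>m n, Amat n p a * Af n m p), (-1/2, Af n m p * Amat n p a, 1\<^sub>m n)]"
definition LP2 :: "nat \<Rightarrow> point \<Rightarrow> nat \<Rightarrow> tlist" where
  "LP2 n p m = [(1/2, 1\<^sub>m n, Af n m p * Af n m p), (-1/2, Af n m p * Af n m p, 1\<^sub>m n)]"
definition LP3 :: "nat \<Rightarrow> point \<Rightarrow> nat \<Rightarrow> tlist" where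
  "LP3 n p m = [(1/2, Af n m p * Zmat n p, 1\<^sub>m n), (1/2, 1\<^sub>m n, Zmat n p * Af n m p),
    (-1/2, Af n m p, Zmat n p), (-1/2, Zmat n p, Af n m p)]"

lemma assoc_nn: "A \<in> carrier_mat (dim_row A) (dim_row A) \<Longrightarrow> B \<in> carrier_mat (dim_row A) (dim_row A) \<Longrightarrow>
  C \<in> carrier_mat (dim_row A) (dim_row A) \<Longrightarrow>
  (A * B) * C = A * (B * (C :: complex mat))" by (rule assoc_mult_mat)
lemma dims_simps[simp]: "dim_row (Amat n q a) = n" "dim_col (Amat n q a) = n"
  "dim_row (Zmat n q) = n" "dim_col (Zmat n q) = n" "dim_row (Af n m q) = n" "dim_col (Af n m q) = n"
  using Amat_carrier[of n q a] Zmat_carrier[of n q] Af_carrier[of n m q] unfolding carrier_mat_def by auto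
lemma one_left_nn: "A \<in> carrier_mat n n \<Longrightarrow> 1\<^sub>m n * A = (A :: complex mat)" by (rule left_mult_one_mat)
lemma one_right_nn: "A \<in> carrier_mat n n \<Longrightarrow> A * 1\<^sub>m n = (A :: complex mat)" by (rule right_mult_one_mat)

lemmas tvnorm = assoc_nn one_left_nn one_right_nn one_entry algebra_simps add_divide_distrib diff_divide_distrib

lemma fusion: "m \<le> d \<Longrightarrow>
  (\<forall>a. m < a \<and> a \<le> d \<longrightarrow> EmIs n d p (\<lambda>q. Amat n q a) (Af n m) (LP1 n p a m)) \<and>
  EmIs n d p (Af n m) (Af n m) (LP2 n p m) \<and> EmIs n d p (Zmat n) (Af n m) (LP3 n p m)"
proof (induction m)
  case 0
  have c1: "EmIs n d p (\<lambda>q. Amat n q a) (Af n 0) (LP1 n p a 0)" for a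
    unfolding Af_0 by (rule EmIs_cong[OF EmIs_const2]) (simp del: index_mult_mat index_one_mat add: LP1_def Af_0 tvnorm)
  have c2: "EmIs n d p (Af n 0) (Af n 0) (LP2 n p 0)"
    unfolding Af_0 by (rule EmIs_cong[OF EmIs_const2]) (simp del: index_mult_mat index_one_mat add: LP2_def Af_0 tvnorm)
  have c3: "EmIs n d p (Zmat n) (Af n 0) (LP3 n p 0)"
    unfolding Af_0 by (rule EmIs_cong[OF EmIs_const2]) (simp del: index_mult_mat index_one_mat add: LP3_def Af_0 tvnorm)
  show ?case using c1 c2 c3 by auto
next
  case (Suc m)
  then have IH1: "\<And>a. m < a \<Longrightarrow> a \<le> d \<Longrightarrow> EmIs n d p (\<lambda>q. Amat n q a) (Af n m) (LP1 n p a m)"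
    and IH2: "EmIs n d p (Af n m) (Af n m) (LP2 n p m)"
    and IH3: "EmIs n d p (Zmat n) (Af n m) (LP3 n p m)" by auto
  have md: "Suc m \<in> {1..d}" using Suc.prems by auto
  note pm = pmat_Af[of n m] pmat_A[of n "Suc m"] pmat_Z[of n]
  have okl1: "okl n (LP1 n p a m)" for a by (simp add: LP1_def)
  have okl2: "okl n (LP2 n p m)" by (simp add: LP2_def)
  have okl3: "okl n (LP3 n p m)" by (simp add: LP3_def)
  have c1: "EmIs n d p (\<lambda>q. Amat n q a) (Af n (Suc m)) (LP1 n p a (Suc m))" if a: "Suc m < a" "a \<le> d" for a
  proof -
    have ad: "a \<in> {1..d}" using a by auto
    have E: "EmIs n d p (\<lambda>q. Amat n q a) (\<lambda>q. Amat n q (Suc m) * Af n m q)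
       (mL2 (Amat n p (Suc m)) (LP1 n p a m) @ mR2 [(1/2, Amat n p (Suc m), Amat n p a), (1/2, Amat n p a, Amat n p (Suc m)),
    (-1/2, 1\<^sub>m n, Amat n p a * Amat n p (Suc m)), (-1/2, Amat n p (Suc m) * Amat n p a, 1\<^sub>m n)] (Af n m p))"
      by (rule EmIs_mult2[OF pmat_A pmat_Af pmat_A IH1 B_AAx[OF ad md]]) (use a okl1 in auto)
    show ?thesis unfolding Af_Suc
      by (rule EmIs_cong[OF E]) (simp del: index_mult_mat index_one_mat add: LP1_def Af_Suc tvnorm)
  qed
  have c3: "EmIs n d p (Zmat n) (Af n (Suc m)) (LP3 n p (Suc m))"
  proof -
    have E: "EmIs n d p (Zmat n) (\<lambda>q. Amat n q (Suc m) * Af n m q)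
       (mL2 (Amat n p (Suc m)) (LP3 n p m) @ mR2 [(1/2, Amat n p (Suc m) * Zmat n p, 1\<^sub>m n), (1/2, 1\<^sub>m n, Zmat n p * Amat n p (Suc m)),
    (-1/2, Amat n p (Suc m), Zmat n p), (-1/2, Zmat n p, Amat n p (Suc m))] (Af n m p))"
      by (rule EmIs_mult2[OF pmat_A pmat_Af pmat_Z IH3 B_ZA[OF md]]) (use okl3 in auto)
    show ?thesis unfolding Af_Suc
      by (rule EmIs_cong[OF E]) (simp del: index_mult_mat index_one_mat add: LP3_def Af_Suc tvnorm)
  qed
  have c2: "EmIs n d p (Af n (Suc m)) (Af n (Suc m)) (LP2 n p (Suc m))"
  proof -
    have BA: "EmIs n d p (\<lambda>q. Amat n q (Suc m)) (Af n m) (LP1 n p (Suc m) m)"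
      using IH1[of "Suc m"] Suc.prems by auto
    have AB: "EmIs n d p (Af n m) (\<lambda>q. Amat n q (Suc m)) (msw (LP1 n p (Suc m) m))"
      by (rule EmIs_swap[OF BA])
    have E1: "EmIs n d p (Af n m) (\<lambda>q. Amat n q (Suc m) * Af n m q)
       (mL2 (Amat n p (Suc m)) (LP2 n p m) @ mR2 (msw (LP1 n p (Suc m) m)) (Af n m p))"
      by (rule EmIs_mult2[OF pmat_A pmat_Af pmat_Af IH2 AB]) (use okl1 okl2 in auto)
    have E2: "EmIs n d p (\<lambda>q. Amat n q (Suc m)) (\<lambda>q. Amat n q (Suc m) * Af n m q)
       (mL2 (Amat n p (Suc m)) (LP1 n p (Suc m) m) @ mR2 [(1/2, 1\<^sub>m n, Amat n p (Suc m) * Amat n p (Suc m)),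
          (-1/2, Amat n p (Suc m) * Amat n p (Suc m), 1\<^sub>m n)] (Af n m p))"
      by (rule EmIs_mult2[OF pmat_A pmat_Af pmat_A BA B_AA[OF md]]) (use okl1 in auto)
    have E: "EmIs n d p (\<lambda>q. Amat n q (Suc m) * Af n m q) (\<lambda>q. Amat n q (Suc m) * Af n m q)
      (mL1 (Amat n p (Suc m)) (mL2 (Amat n p (Suc m)) (LP2 n p m) @ mR2 (msw (LP1 n p (Suc m) m)) (Af n m p))
       @ mR1 (mL2 (Amat n p (Suc m)) (LP1 n p (Suc m) m) @ mR2 [(1/2, 1\<^sub>m n, Amat n p (Suc m) * Amat n p (Suc m)),
          (-1/2, Amat n p (Suc m) * Amat n p (Suc m), 1\<^sub>m n)] (Af n m p)) (Af n m p))"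
      by (rule EmIs_mult1[OF pmat_A pmat_Af pmat_mult[OF pmat_A pmat_Af] E1 E2]) (use okl1 okl2 in auto)
    show ?thesis unfolding Af_Suc
      by (rule EmIs_cong[OF E]) (simp del: index_mult_mat index_one_mat add: LP1_def LP2_def msw_def Af_Suc tvnorm)
  qed
  show ?case using c1 c2 c3 by (auto simp: Suc_less_eq2)
qed

lemma P_entry: fixes Z A :: "complex mat" assumes Z: "Z \<in> carrier_mat n n" and A: "A \<in> carrier_mat n n" and x: "x < n" "y < n"
  shows "(Z + a \<cdot>\<^sub>m (A * Z)) $$ (x,y) = Z $$ (x,y) + a * (A * Z) $$ (x,y)"
  using Z A x by (simp del: index_mult_mat add: index_mult_mat(2,3))

lemma PQ_entry: fixes Z A :: "complex mat" assumes Z: "Z \<in> carrier_mat n n" and A: "A \<in> carrier_mat n n" and x: "x < n" "y < n"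
  shows "((Z + a \<cdot>\<^sub>m (A * Z)) * (Z + b \<cdot>\<^sub>m (A * Z))) $$ (x,y) =
    (Z * Z) $$ (x,y) + b * (Z * (A * Z)) $$ (x,y) + a * (A * (Z * Z)) $$ (x,y) + (a * b) * (A * (Z * (A * Z))) $$ (x,y)"
proof -
  have c: "A * Z \<in> carrier_mat n n" "Z + a \<cdot>\<^sub>m (A * Z) \<in> carrier_mat n n" "Z + b \<cdot>\<^sub>m (A * Z) \<in> carrier_mat n n"
    using A Z by auto
  have e1: "(A * (Z * Z)) = (A * Z) * Z" "A * (Z * (A * Z)) = (A * Z) * (A * Z)"
    using assoc_mult_mat[OF A Z Z] assoc_mult_mat[OF A Z c(1)] by auto
  have "((Z + a \<cdot>\<^sub>m (A * Z)) * (Z + b \<cdot>\<^sub>m (A * Z))) $$ (x,y) =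
     (\<Sum>m<n. (Z $$ (x,m) + a * (A * Z) $$ (x,m)) * (Z $$ (m,y) + b * (A * Z) $$ (m,y)))"
    using x c Z A by (subst mult_entry[OF c(2,3) x]) (auto intro!: sum.cong simp: P_entry)
  also have "\<dots> = (\<Sum>m<n. Z $$ (x,m) * Z $$ (m,y) + b * (Z $$ (x,m) * (A * Z) $$ (m,y))
     + a * ((A * Z) $$ (x,m) * Z $$ (m,y)) + (a * b) * ((A * Z) $$ (x,m) * (A * Z) $$ (m,y)))"
    by (intro sum.cong refl) (simp add: algebra_simps)
  also have "\<dots> = (\<Sum>m<n. Z $$ (x,m) * Z $$ (m,y)) + b * (\<Sum>m<n. Z $$ (x,m) * (A * Z) $$ (m,y))
     + a * (\<Sum>m<n. (A * Z) $$ (x,m) * Z $$ (m,y)) + (a * b) * (\<Sum>m<n. (A * Z) $$ (x,m) * (A * Z) $$ (m,y))"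
    by (simp only: sum.distrib sum_distrib_left)
  also have "\<dots> = (Z * Z) $$ (x,y) + b * (Z * (A * Z)) $$ (x,y) + a * (A * (Z * Z)) $$ (x,y) + (a * b) * (A * (Z * (A * Z))) $$ (x,y)"
    unfolding e1 using x c Z by (simp only: mult_entry)
  finally show ?thesis .
qed


lemma tveq_main: fixes Z A :: "complex mat" and \<mu> \<eta> :: complex
  assumes Z: "Z \<in> carrier_mat n n" and A: "A \<in> carrier_mat n n" and ijkl: "i < n" "j < n" "k < n" "l < n"
  defines "ZZl \<equiv> [(1/2, 1\<^sub>m n, Z * Z), (-1/2, Z * Z, 1\<^sub>m n)]"
    and "L2 \<equiv> [(1/2, 1\<^sub>m n, A * A), (-1/2, A * A, 1\<^sub>m n)]"
    and "L3 \<equiv> [(1/2, A * Z, 1\<^sub>m n), (1/2, 1\<^sub>m n, Z * A), (-1/2, A, Z), (-1/2, Z, A)]"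
  shows "tv ((ZZl @ msc \<eta> (mL2 A ZZl @ mR2 L3 Z)) @ msc \<mu> ((mL1 A ZZl @ mR1 (msw L3) Z) @
      msc \<eta> (mL1 A (mL2 A ZZl @ mR2 L3 Z) @ mR1 (mL2 A (msw L3) @ mR2 L2 Z) Z))) i j k l =
    tv [(1/2, 1\<^sub>m n, (Z + \<mu> \<cdot>\<^sub>m (A * Z)) * (Z + \<eta> \<cdot>\<^sub>m (A * Z))),
        (-1/2, (Z + \<eta> \<cdot>\<^sub>m (A * Z)) * (Z + \<mu> \<cdot>\<^sub>m (A * Z)), 1\<^sub>m n),
     (1/2, Z + \<mu> \<cdot>\<^sub>m (A * Z), Z), (-1/2, Z, Z + \<mu> \<cdot>\<^sub>m (A * Z)),
     (1/2, Z + \<eta> \<cdot>\<^sub>m (A * Z), Z), (-1/2, Z, Z + \<eta> \<cdot>\<^sub>m (A * Z))] i j k l"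
proof -
  have [simp]: "dim_row A = n" "dim_col A = n" "dim_row Z = n" "dim_col Z = n" using A Z by auto
  show ?thesis unfolding ZZl_def L2_def L3_def
    using ijkl A Z
    by (simp del: index_mult_mat index_one_mat index_add_mat index_smult_mat
         add: P_entry PQ_entry msw_def tvnorm)
qed

lemma Zeta_eq: "Zeta n d c = (\<lambda>q. Zmat n q + c \<cdot>\<^sub>m (Af n d q * Zmat n q))"
  unfolding Zeta_def Smat_def Af_def by simp

definition NICE :: "nat \<Rightarrow> nat \<Rightarrow> point \<Rightarrow> complex \<Rightarrow> complex \<Rightarrow> tlist" where
  "NICE n d p \<mu> \<eta> = [(1/2, 1\<^sub>m n, Zeta n d \<mu> p * Zeta n d \<eta> p), (-1/2, Zeta n d \<eta> p * Zeta n d \<mu> p, 1\<^sub>m n),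
     (1/2, Zeta n d \<mu> p, Zmat n p), (-1/2, Zmat n p, Zeta n d \<mu> p),
     (1/2, Zeta n d \<eta> p, Zmat n p), (-1/2, Zmat n p, Zeta n d \<eta> p)]"

lemma EPQ: assumes d: "1 \<le> d"
  shows "EmIs n d p (Zeta n d \<mu>) (Zeta n d \<eta>) (NICE n d p \<mu> \<eta>)"
proof -
  have F: "EmIs n d p (Af n d) (Af n d) (LP2 n p d)" "EmIs n d p (Zmat n) (Af n d) (LP3 n p d)"
    using fusion[of d d n p] by auto
  note pA = pmat_Af[of n d] and pZ = pmat_Z[of n]
  note pS = pmat_mult[OF pA pZ]
  have ok: "okl n (LP2 n p d)" "okl n (LP3 n p d)" by (simp_all add: LP2_def LP3_def)
  have AZ: "EmIs n d p (Af n d) (Zmat n) (msw (LP3 n p d))" by (rule EmIs_swap[OF F(2)])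
  note ZZ = B_ZZ[of n d p]
  have ZS: "EmIs n d p (Zmat n) (\<lambda>q. Af n d q * Zmat n q) (mL2 (Af n d p)
    [(1/2, 1\<^sub>m n, Zmat n p * Zmat n p), (-1/2, Zmat n p * Zmat n p, 1\<^sub>m n)] @ mR2 (LP3 n p d) (Zmat n p))"
    by (rule EmIs_mult2[OF pA pZ pZ ZZ F(2)]) (use ok in auto)
  have SZ: "EmIs n d p (\<lambda>q. Af n d q * Zmat n q) (Zmat n) (mL1 (Af n d p)
    [(1/2, 1\<^sub>m n, Zmat n p * Zmat n p), (-1/2, Zmat n p * Zmat n p, 1\<^sub>m n)] @ mR1 (msw (LP3 n p d)) (Zmat n p))"
    by (rule EmIs_mult1[OF pA pZ pZ ZZ AZ]) (use ok in auto)
  have AS: "EmIs n d p (Af n d) (\<lambda>q. Af n d q * Zmat n q) (mL2 (Af n d p) (msw (LP3 n p d)) @ mR2 (LP2 n p d) (Zmat n p))"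
    by (rule EmIs_mult2[OF pA pZ pA AZ F(1)]) (use ok in auto)
  have SS: "EmIs n d p (\<lambda>q. Af n d q * Zmat n q) (\<lambda>q. Af n d q * Zmat n q)
     (mL1 (Af n d p) (mL2 (Af n d p)
    [(1/2, 1\<^sub>m n, Zmat n p * Zmat n p), (-1/2, Zmat n p * Zmat n p, 1\<^sub>m n)] @ mR2 (LP3 n p d) (Zmat n p))
     @ mR1 (mL2 (Af n d p) (msw (LP3 n p d)) @ mR2 (LP2 n p d) (Zmat n p)) (Zmat n p))"
    by (rule EmIs_mult1[OF pA pZ pS ZS AS]) (use ok in auto)
  have ZQ: "EmIs n d p (Zmat n) (Zeta n d \<eta>) ([(1/2, 1\<^sub>m n, Zmat n p * Zmat n p), (-1/2, Zmat n p * Zmat n p, 1\<^sub>m n)] @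
     msc \<eta> (mL2 (Af n d p)
    [(1/2, 1\<^sub>m n, Zmat n p * Zmat n p), (-1/2, Zmat n p * Zmat n p, 1\<^sub>m n)] @ mR2 (LP3 n p d) (Zmat n p)))"
    unfolding Zeta_eq by (rule EmIs_add2[OF pZ pmat_smult[OF pS] ZZ EmIs_smult2[OF pS ZS]])
  have SQ: "EmIs n d p (\<lambda>q. Af n d q * Zmat n q) (Zeta n d \<eta>) ((mL1 (Af n d p)
    [(1/2, 1\<^sub>m n, Zmat n p * Zmat n p), (-1/2, Zmat n p * Zmat n p, 1\<^sub>m n)] @ mR1 (msw (LP3 n p d)) (Zmat n p)) @
     msc \<eta> (mL1 (Af n d p) (mL2 (Af n d p)
    [(1/2, 1\<^sub>m n, Zmat n p * Zmat n p), (-1/2, Zmat n p * Zmat n p, 1\<^sub>m n)] @ mR2 (LP3 n p d) (Zmat n p))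
     @ mR1 (mL2 (Af n d p) (msw (LP3 n p d)) @ mR2 (LP2 n p d) (Zmat n p)) (Zmat n p)))"
    unfolding Zeta_eq by (rule EmIs_add2[OF pZ pmat_smult[OF pS] SZ EmIs_smult2[OF pS SS]])
  have PQ: "EmIs n d p (Zeta n d \<mu>) (Zeta n d \<eta>) (([(1/2, 1\<^sub>m n, Zmat n p * Zmat n p), (-1/2, Zmat n p * Zmat n p, 1\<^sub>m n)] @
     msc \<eta> (mL2 (Af n d p)
    [(1/2, 1\<^sub>m n, Zmat n p * Zmat n p), (-1/2, Zmat n p * Zmat n p, 1\<^sub>m n)] @ mR2 (LP3 n p d) (Zmat n p))) @
    msc \<mu> ((mL1 (Af n d p)
    [(1/2, 1\<^sub>m n, Zmat n p * Zmat n p), (-1/2, Zmat n p * Zmat n p, 1\<^sub>m n)] @ mR1 (msw (LP3 n p d)) (Zmat n p)) @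
     msc \<eta> (mL1 (Af n d p) (mL2 (Af n d p)
    [(1/2, 1\<^sub>m n, Zmat n p * Zmat n p), (-1/2, Zmat n p * Zmat n p, 1\<^sub>m n)] @ mR2 (LP3 n p d) (Zmat n p))
     @ mR1 (mL2 (Af n d p) (msw (LP3 n p d)) @ mR2 (LP2 n p d) (Zmat n p)) (Zmat n p))))"
    unfolding Zeta_eq by (rule EmIs_add1[OF pZ pmat_smult[OF pS] ZQ[unfolded Zeta_eq] EmIs_smult1[OF pS SQ[unfolded Zeta_eq]]])
  show ?thesis
    by (rule EmIs_cong[OF PQ], unfold NICE_def LP2_def LP3_def Zeta_eq, rule tveq_main) auto
qed

lemma mtrace_nn: "A \<in> carrier_mat n n \<Longrightarrow> mtrace A = (\<Sum>i<n. A $$ (i,i))"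
  unfolding mtrace_def by simp

lemma tr_cyc: fixes A B :: "complex mat"
  assumes A: "A \<in> carrier_mat n n" and B: "B \<in> carrier_mat n n"
  shows "mtrace (A * B) = mtrace (B * A)"
proof -
  have "mtrace (A * B) = (\<Sum>i<n. \<Sum>m<n. A $$ (i,m) * B $$ (m,i))"
    using A B by (subst mtrace_nn[of _ n]) (auto simp del: index_mult_mat simp: mult_entry)
  also have "\<dots> = (\<Sum>m<n. \<Sum>i<n. B $$ (m,i) * A $$ (i,m))"
    by (subst sum.swap) (simp add: mult.commute)
  also have "\<dots> = mtrace (B * A)"
    using A B by (subst mtrace_nn[of _ n]) (auto simp del: index_mult_mat simp: mult_entry)
  finally show ?thesis .
qed

lemma tr_add: fixes A B :: "complex mat"
  assumes A: "A \<in> carrier_mat n n" and B: "B \<in> carrier_mat n n"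
  shows "mtrace (A + B) = mtrace A + mtrace B"
  using A B by (simp add: mtrace_nn[of _ n] sum.distrib)

lemma tr_smult: fixes A :: "complex mat"
  assumes A: "A \<in> carrier_mat n n"
  shows "mtrace (c \<cdot>\<^sub>m A) = c * mtrace A"
  using A by (simp add: mtrace_nn[of _ n] sum_distrib_left)

lemma pow_comm1: fixes A :: "complex mat" assumes A: "A \<in> carrier_mat n n"
  shows "A ^\<^sub>m k * A = A * A ^\<^sub>m k"
proof (induction k)
  case 0 then show ?case using A by simp
next
  case (Suc k)
  have "A ^\<^sub>m Suc k * A = (A ^\<^sub>m k * A) * A" by simp
  also have "\<dots> = (A * A ^\<^sub>m k) * A" using Suc by simp
  also have "\<dots> = A * (A ^\<^sub>m k * A)" using A by (simp add: assoc_mult_mat[of _ n n _ n _ n])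
  finally show ?case by simp
qed

lemma pow_comm2: fixes A :: "complex mat" assumes A: "A \<in> carrier_mat n n"
  shows "A ^\<^sub>m k * A ^\<^sub>m m = A ^\<^sub>m m * A ^\<^sub>m k"
proof (induction m)
  case 0 then show ?case using A by simp
next
  case (Suc m)
  have "A ^\<^sub>m k * A ^\<^sub>m Suc m = (A ^\<^sub>m k * A ^\<^sub>m m) * A"
    using A by (simp add: assoc_mult_mat[of _ n n _ n _ n])
  also have "\<dots> = (A ^\<^sub>m m * A ^\<^sub>m k) * A" using Suc by simp
  also have "\<dots> = A ^\<^sub>m m * (A ^\<^sub>m k * A)" using A by (simp add: assoc_mult_mat[of _ n n _ n _ n])
  also have "\<dots> = A ^\<^sub>m m * (A * A ^\<^sub>m k)" using pow_comm1[OF A] by simp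
  also have "\<dots> = A ^\<^sub>m Suc m * A ^\<^sub>m k" using A by (simp add: assoc_mult_mat[of _ n n _ n _ n])
  finally show ?case .
qed

definition tau :: "complex mat \<Rightarrow> complex mat \<Rightarrow> complex mat \<Rightarrow> complex mat \<Rightarrow> complex" where
  "tau F G X Y = mtrace (F * X * G * Y)"

lemma tau_lin:
  fixes F G X Y X2 Y2 :: "complex mat"
  assumes c: "F \<in> carrier_mat n n" "G \<in> carrier_mat n n" "X \<in> carrier_mat n n" "Y \<in> carrier_mat n n"
    "X2 \<in> carrier_mat n n" "Y2 \<in> carrier_mat n n"
  shows "tau F G (X + a \<cdot>\<^sub>m X2) Y = tau F G X Y + a * tau F G X2 Y"
    "tau F G X (Y + a \<cdot>\<^sub>m Y2) = tau F G X Y + a * tau F G X Y2"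
proof -
  have "F * (X + a \<cdot>\<^sub>m X2) * G * Y = F * X * G * Y + a \<cdot>\<^sub>m (F * X2 * G * Y)"
    using c by (simp add: mult_add_distrib_mat[of _ n n] add_mult_distrib_mat[of _ n n]
         mult_smult_distrib[of _ n n] mult_smult_assoc_mat[of _ n n])
  then show "tau F G (X + a \<cdot>\<^sub>m X2) Y = tau F G X Y + a * tau F G X2 Y"
    unfolding tau_def using c by (simp add: tr_add[of _ n] tr_smult[of _ n])
  have "F * X * G * (Y + a \<cdot>\<^sub>m Y2) = F * X * G * Y + a \<cdot>\<^sub>m (F * X * G * Y2)"
    using c by (simp add: mult_add_distrib_mat[of _ n n] mult_smult_distrib[of _ n n])
  then show "tau F G X (Y + a \<cdot>\<^sub>m Y2) = tau F G X Y + a * tau F G X Y2"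
    unfolding tau_def using c by (simp add: tr_add[of _ n] tr_smult[of _ n])
qed

definition dmat :: "nat \<Rightarrow> (point \<Rightarrow> complex mat) \<Rightarrow> coord \<Rightarrow> point \<Rightarrow> complex mat" where
  "dmat n M c p = mat n n (\<lambda>(i,j). pd (\<lambda>q. M q $$ (i,j)) c p)"

lemma dmat_carrier[simp]: "dmat n M c p \<in> carrier_mat n n"
  unfolding dmat_def by simp
lemma dmat_dims[simp]: "dim_row (dmat n M c p) = n" "dim_col (dmat n M c p) = n"
  unfolding dmat_def by simp_all
lemma dmat_entry[simp]: "i < n \<Longrightarrow> j < n \<Longrightarrow> dmat n M c p $$ (i,j) = pd (\<lambda>q. M q $$ (i,j)) c p"
  unfolding dmat_def by simp

lemma dmat_mult: assumes M: "pmat n M" and N: "pmat n N"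
  shows "dmat n (\<lambda>q. M q * N q) c p = dmat n M c p * N p + M p * dmat n N c p"
proof (rule eq_matI)
  fix i j assume ij: "i < dim_row (dmat n M c p * N p + M p * dmat n N c p)" "j < dim_col (dmat n M c p * N p + M p * dmat n N c p)"
  then have ij': "i < n" "j < n" using M N by auto
  have "(\<lambda>q. (M q * N q) $$ (i,j)) = (\<lambda>q. \<Sum>m<n. M q $$ (i,m) * N q $$ (m,j))"
    using M N ij' by (intro ext mult_entry) auto
  then have "dmat n (\<lambda>q. M q * N q) c p $$ (i,j) = pd (\<lambda>q. \<Sum>m<n. M q $$ (i,m) * N q $$ (m,j)) c p"
    using ij' by simp
  also have "\<dots> = (\<Sum>m<n. pd (\<lambda>q. M q $$ (i,m) * N q $$ (m,j)) c p)"
    using M N ij' by (subst pd_sum) (auto intro!: pf_mult pmat_pf)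
  also have "\<dots> = (\<Sum>m<n. pd (\<lambda>q. M q $$ (i,m)) c p * N p $$ (m,j)) + (\<Sum>m<n. M p $$ (i,m) * pd (\<lambda>q. N q $$ (m,j)) c p)"
    using M N ij' by (simp add: pd_mult pmat_pf sum.distrib add.commute)
  also have "\<dots> = (dmat n M c p * N p + M p * dmat n N c p) $$ (i,j)"
    using M N ij' by (simp del: index_mult_mat add: mult_entry[of _ n] index_mult_mat(2,3))
  finally show "dmat n (\<lambda>q. M q * N q) c p $$ (i,j) = (dmat n M c p * N p + M p * dmat n N c p) $$ (i,j)" .
qed (use M N in auto)

lemma dmat_const: "dmat n (\<lambda>q. C) c p = 0\<^sub>m n n"
  by (rule eq_matI) (auto simp: dmat_def)

lemma tr_zero: "Y \<in> carrier_mat n n \<Longrightarrow> mtrace (Y * 0\<^sub>m n n :: complex mat) = 0"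
  by (simp add: mtrace_nn[of _ n] scalar_prod_def)

lemma tr_pow_grad: assumes M: "pmat n M"
  shows "Y \<in> carrier_mat n n \<Longrightarrow> Y * M p = M p * Y \<Longrightarrow>
    mtrace (Y * dmat n (\<lambda>q. M q ^\<^sub>m k) c p) = of_nat k * mtrace (Y * M p ^\<^sub>m (k - 1) * dmat n M c p)"
proof (induction k arbitrary: Y)
  case 0
  have "(\<lambda>q. M q ^\<^sub>m 0) = (\<lambda>q. 1\<^sub>m n)" using M by (intro ext) auto
  then show ?case using 0 by (simp add: dmat_const tr_zero mtrace_def)
next
  case (Suc k)
  note Y = Suc.prems(1)
  have cM[simp]: "M p \<in> carrier_mat n n" using M by simp
  define D where "D = dmat n (\<lambda>q. M q ^\<^sub>m k) c p"
  define dM where "dM = dmat n M c p"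
  have cD[simp]: "D \<in> carrier_mat n n" "dM \<in> carrier_mat n n" unfolding D_def dM_def by simp_all
  have cMk[simp]: "M p ^\<^sub>m k \<in> carrier_mat n n" by simp
  have e: "dmat n (\<lambda>q. M q ^\<^sub>m Suc k) c p = D * M p + M p ^\<^sub>m k * dM"
    unfolding D_def dM_def using dmat_mult[OF pmat_pow[OF M, of k] M, of c p] by simp
  have "mtrace (Y * dmat n (\<lambda>q. M q ^\<^sub>m Suc k) c p) = mtrace (Y * (D * M p)) + mtrace (Y * (M p ^\<^sub>m k * dM))"
    unfolding e using Y by (simp add: mult_add_distrib_mat[of _ n n _ n] tr_add[of _ n])
  also have "mtrace (Y * (D * M p)) = mtrace ((M p * Y) * D)"
  proof -
    have "mtrace (Y * (D * M p)) = mtrace ((Y * D) * M p)" using Y by (simp add: assoc_mult_mat[of _ n n _ n _ n])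
    also have "\<dots> = mtrace (M p * (Y * D))" using Y by (intro tr_cyc[of _ n]) auto
    also have "\<dots> = mtrace ((M p * Y) * D)" using Y by (simp add: assoc_mult_mat[of _ n n _ n _ n])
    finally show ?thesis .
  qed
  also have "\<dots> = of_nat k * mtrace (M p * Y * M p ^\<^sub>m (k - 1) * dM)"
    unfolding D_def dM_def
  proof (rule Suc.IH)
    show "M p * Y \<in> carrier_mat n n" using Y by simp
    show "M p * Y * M p = M p * (M p * Y)"
      using Y Suc.prems(2) by (simp add: assoc_mult_mat[of _ n n _ n _ n])
  qed
  also have "of_nat k * mtrace (M p * Y * M p ^\<^sub>m (k - 1) * dM) = of_nat k * mtrace (Y * M p ^\<^sub>m k * dM)"
  proof (cases k)
    case 0 then show ?thesis by simp
  next
    case (Suc k')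
    have "M p * Y * M p ^\<^sub>m k' = (Y * M p) * M p ^\<^sub>m k'"
      using Suc.prems(2) by simp
    also have "\<dots> = Y * (M p * M p ^\<^sub>m k')"
      using Y by (simp add: assoc_mult_mat[of _ n n _ n _ n])
    also have "\<dots> = Y * M p ^\<^sub>m k" using Suc pow_comm1[OF cM, of k'] by simp
    finally show ?thesis using Suc by simp
  qed
  also have "mtrace (Y * (M p ^\<^sub>m k * dM)) = mtrace (Y * M p ^\<^sub>m k * dM)"
    using Y by (simp add: assoc_mult_mat[of _ n n _ n _ n])
  finally show ?case unfolding dM_def by (simp add: algebra_simps)
qed

lemma pd_trace: assumes M: "pmat n M"
  shows "pd (\<lambda>q. mtrace (M q)) c p = mtrace (dmat n M c p)"
proof -
  have "(\<lambda>q. mtrace (M q)) = (\<lambda>q. \<Sum>i<n. M q $$ (i,i))"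
    using M by (intro ext) (simp add: mtrace_def)
  note e = this
  have "pd (\<lambda>q. mtrace (M q)) c p = (\<Sum>i<n. pd (\<lambda>q. M q $$ (i,i)) c p)"
    unfolding e using M by (subst pd_sum) (auto intro!: pmat_pf)
  also have "\<dots> = mtrace (dmat n M c p)"
    by (simp add: mtrace_def)
  finally show ?thesis .
qed

lemma grad_tr: assumes P: "pmat n P"
  shows "pd (\<lambda>q. mtrace (P q ^\<^sub>m k)) c p =
    (\<Sum>i<n. \<Sum>j<n. (of_nat k * (P p ^\<^sub>m (k - 1)) $$ (i,j)) * pd (\<lambda>q. P q $$ (j,i)) c p)"
proof -
  have cP[simp]: "P p \<in> carrier_mat n n" using P by simp
  have "pd (\<lambda>q. mtrace (P q ^\<^sub>m k)) c p = mtrace (1\<^sub>m n * dmat n (\<lambda>q. P q ^\<^sub>m k) c p)"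
    by (simp add: pd_trace[OF pmat_pow[OF P]])
  also have "\<dots> = of_nat k * mtrace (1\<^sub>m n * P p ^\<^sub>m (k - 1) * dmat n P c p)"
    by (rule tr_pow_grad[OF P]) (use left_mult_one_mat[OF cP] right_mult_one_mat[OF cP] in auto)
  also have "\<dots> = of_nat k * (\<Sum>i<n. \<Sum>j<n. (P p ^\<^sub>m (k - 1)) $$ (i,j) * pd (\<lambda>q. P q $$ (j,i)) c p)"
    using left_mult_one_mat[of "P p ^\<^sub>m (k - 1)" n n]
    by (simp del: index_mult_mat add: mtrace_nn[of _ n] mult_entry[of _ n] index_mult_mat(2,3))
  finally show ?thesis by (simp add: sum_distrib_left mult.assoc)
qed

lemma qpb_lin1n: fixes N :: nat shows "(\<And>a. a \<in> coords n d \<Longrightarrow> pd f a p = (\<Sum>i<N. \<Sum>j<N. c i j * pd (h i j) a p)) \<Longrightarrow>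
  qpb n d f g p = (\<Sum>i<N. \<Sum>j<N. c i j * qpb n d (h i j) g p)"
proof -
  assume D: "\<And>a. a \<in> coords n d \<Longrightarrow> pd f a p = (\<Sum>i<N. \<Sum>j<N. c i j * pd (h i j) a p)"
  have D': "\<And>a. a \<in> coords n d \<Longrightarrow> pd f a p = (\<Sum>x\<in>{..<N}\<times>{..<N}. (case_prod c) x * pd (case_prod h x) a p)"
    using D by (simp add: sum.cartesian_product')
  have "qpb n d f g p = (\<Sum>x\<in>{..<N}\<times>{..<N}. (case_prod c) x * qpb n d (case_prod h x) g p)"
    by (rule qpb_lin1[OF _ D']) (auto intro: finite_cartesian_product)
  then show ?thesis by (simp add: sum.cartesian_product')
qed

lemma qpb_lin2n: fixes N :: nat shows "(\<And>a. a \<in> coords n d \<Longrightarrow> pd g a p = (\<Sum>i<N. \<Sum>j<N. c i j * pd (h i j) a p)) \<Longrightarrow>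
  qpb n d f g p = (\<Sum>i<N. \<Sum>j<N. c i j * qpb n d f (h i j) p)"
proof -
  assume D: "\<And>a. a \<in> coords n d \<Longrightarrow> pd g a p = (\<Sum>i<N. \<Sum>j<N. c i j * pd (h i j) a p)"
  have "qpb n d f g p = - qpb n d g f p" by (rule qpb_antisym)
  also have "\<dots> = - (\<Sum>i<N. \<Sum>j<N. c i j * qpb n d (h i j) f p)" using qpb_lin1n[OF D] by simp
  also have "\<dots> = (\<Sum>i<N. \<Sum>j<N. c i j * qpb n d f (h i j) p)"
    by (simp add: sum_negf[symmetric] qpb_antisym[of n d "h _ _" f p])
  finally show ?thesis .
qed

lemma pmat_Zeta: "pmat n (Zeta n d c)"
  unfolding Zeta_eq by (intro pmat_add pmat_smult pmat_mult pmat_Z pmat_Af)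

lemma qpb_tr_expand:
  shows "qpb n d (trZpow n d \<mu> k) (trZpow n d \<eta> l) p =
    (\<Sum>i<n. \<Sum>j<n. (of_nat k * (Zeta n d \<mu> p ^\<^sub>m (k - 1)) $$ (i,j)) *
       (\<Sum>a<n. \<Sum>b<n. (of_nat l * (Zeta n d \<eta> p ^\<^sub>m (l - 1)) $$ (a,b)) *
          Em n d p (Zeta n d \<mu>) (Zeta n d \<eta>) j i b a))"
proof -
  have t: "trZpow n d c m = (\<lambda>q. mtrace (Zeta n d c q ^\<^sub>m m))" for c m
    unfolding trZpow_def by (rule ext) simp
  have g1: "\<And>a. a \<in> coords n d \<Longrightarrow> pd (\<lambda>q. mtrace (Zeta n d \<mu> q ^\<^sub>m k)) a p =
    (\<Sum>i<n. \<Sum>j<n. (of_nat k * (Zeta n d \<mu> p ^\<^sub>m (k - 1)) $$ (i,j)) * pd (\<lambda>q. Zeta n d \<mu> q $$ (j,i)) a p)"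
    using grad_tr[OF pmat_Zeta] by blast
  have g2: "\<And>a. a \<in> coords n d \<Longrightarrow> pd (\<lambda>q. mtrace (Zeta n d \<eta> q ^\<^sub>m l)) a p =
    (\<Sum>i<n. \<Sum>j<n. (of_nat l * (Zeta n d \<eta> p ^\<^sub>m (l - 1)) $$ (i,j)) * pd (\<lambda>q. Zeta n d \<eta> q $$ (j,i)) a p)"
    using grad_tr[OF pmat_Zeta] by blast
  have "qpb n d (\<lambda>q. mtrace (Zeta n d \<mu> q ^\<^sub>m k)) (\<lambda>q. mtrace (Zeta n d \<eta> q ^\<^sub>m l)) p =
    (\<Sum>i<n. \<Sum>j<n. (of_nat k * (Zeta n d \<mu> p ^\<^sub>m (k - 1)) $$ (i,j)) *
       qpb n d (\<lambda>q. Zeta n d \<mu> q $$ (j,i)) (\<lambda>q. mtrace (Zeta n d \<eta> q ^\<^sub>m l)) p)"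
    by (rule qpb_lin1n[OF g1])
  also have "\<dots> = (\<Sum>i<n. \<Sum>j<n. (of_nat k * (Zeta n d \<mu> p ^\<^sub>m (k - 1)) $$ (i,j)) *
       (\<Sum>a<n. \<Sum>b<n. (of_nat l * (Zeta n d \<eta> p ^\<^sub>m (l - 1)) $$ (a,b)) *
          Em n d p (Zeta n d \<mu>) (Zeta n d \<eta>) j i b a))"
    unfolding Em_def by (intro sum.cong refl arg_cong[where f="\<lambda>x. _ * x"] qpb_lin2n[OF g2])
  finally show ?thesis unfolding t .
qed

fun tcon :: "complex mat \<Rightarrow> complex mat \<Rightarrow> tlist \<Rightarrow> complex" where
  "tcon F G [] = 0"
| "tcon F G ((c,U,Y)#xs) = c * mtrace (F * Y * G * U) + tcon F G xs"

lemma contract1: fixes F G U Y :: "complex mat"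
  assumes c: "F \<in> carrier_mat n n" "G \<in> carrier_mat n n" "U \<in> carrier_mat n n" "Y \<in> carrier_mat n n"
  shows "(\<Sum>i<n. \<Sum>j<n. F $$ (i,j) * (\<Sum>a<n. \<Sum>b<n. G $$ (a,b) * (c0 * U $$ (b,i) * Y $$ (j,a)))) =
    c0 * mtrace (F * Y * G * U)"
proof -
  have "F * Y * G * U = F * (Y * (G * U))" using c by (simp add: assoc_mult_mat[of _ n n _ n _ n])
  then have "mtrace (F * Y * G * U) = (\<Sum>i<n. \<Sum>j<n. F $$ (i,j) * (\<Sum>a<n. Y $$ (j,a) * (\<Sum>b<n. G $$ (a,b) * U $$ (b,i))))"
    using c by (simp del: index_mult_mat add: mtrace_nn[of _ n] mult_entry[of _ n] index_mult_mat(2,3))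
  then show ?thesis
    by (simp add: sum_distrib_left algebra_simps)
qed

lemma contract: fixes F G :: "complex mat"
  assumes c: "F \<in> carrier_mat n n" "G \<in> carrier_mat n n"
  shows "okl n xs \<Longrightarrow> (\<Sum>i<n. \<Sum>j<n. F $$ (i,j) * (\<Sum>a<n. \<Sum>b<n. G $$ (a,b) * tv xs j i b a)) = tcon F G xs"
proof (induction xs)
  case Nil then show ?case by simp
next
  case (Cons x xs)
  obtain c0 U Y where x: "x = (c0,U,Y)" by (cases x)
  have UY: "U \<in> carrier_mat n n" "Y \<in> carrier_mat n n" "okl n xs" using Cons.prems x by auto
  have "(\<Sum>i<n. \<Sum>j<n. F $$ (i,j) * (\<Sum>a<n. \<Sum>b<n. G $$ (a,b) * tv (x#xs) j i b a)) =
     (\<Sum>i<n. \<Sum>j<n. F $$ (i,j) * (\<Sum>a<n. \<Sum>b<n. G $$ (a,b) * (c0 * U $$ (b,i) * Y $$ (j,a)))) +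
     (\<Sum>i<n. \<Sum>j<n. F $$ (i,j) * (\<Sum>a<n. \<Sum>b<n. G $$ (a,b) * tv xs j i b a))"
    by (simp add: x sum.distrib ring_distribs)
  also have "\<dots> = tcon F G (x#xs)"
    using contract1[OF c UY(1,2)] Cons.IH[OF UY(3)] by (simp add: x)
  finally show ?case .
qed

lemma tr_identities: fixes F G P Q Z :: "complex mat"
  assumes c: "F \<in> carrier_mat n n" "G \<in> carrier_mat n n" "P \<in> carrier_mat n n" "Q \<in> carrier_mat n n"
    "Z \<in> carrier_mat n n"
    and FP: "F * P = P * F" and GQ: "G * Q = Q * G"
  shows "mtrace (F * (P * Q) * G * 1\<^sub>m n) = mtrace (F * 1\<^sub>m n * G * (Q * P))"
    and "tau F G P Q = tau F G Q P"
proof -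
  note A = assoc_mult_mat[of _ n n _ n _ n]
  have "mtrace (F * 1\<^sub>m n * G * (Q * P)) = mtrace ((F * G * Q) * P)"
    using c by (simp add: A)
  also have "\<dots> = mtrace (P * (F * G * Q))" using c by (intro tr_cyc[of _ n]) auto
  also have "\<dots> = mtrace ((P * F) * (G * Q))" using c by (simp add: A)
  also have "\<dots> = mtrace ((F * P) * (Q * G))" using FP GQ by simp
  also have "\<dots> = mtrace (F * (P * Q) * G * 1\<^sub>m n)" using c by (simp add: A)
  finally show "mtrace (F * (P * Q) * G * 1\<^sub>m n) = mtrace (F * 1\<^sub>m n * G * (Q * P))" by simp
  have "tau F G Q P = mtrace ((F * Q * G) * P)" unfolding tau_def ..
  also have "\<dots> = mtrace (P * (F * Q * G))" using c by (intro tr_cyc[of _ n]) auto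
  also have "\<dots> = mtrace ((P * F) * (Q * G))" using c by (simp add: A)
  also have "\<dots> = mtrace ((F * P) * (G * Q))" using FP GQ by simp
  also have "\<dots> = tau F G P Q" unfolding tau_def using c by (simp add: A)
  finally show "tau F G P Q = tau F G Q P" by simp
qed

lemma tr_identity_eq: fixes F G P Z :: "complex mat"
  assumes c: "F \<in> carrier_mat n n" "G \<in> carrier_mat n n" "P \<in> carrier_mat n n" "Z \<in> carrier_mat n n"
    and FP: "F * P = P * F" and GP: "G * P = P * G" and FG: "F * G = G * F"
  shows "tau F G Z P = tau F G P Z"
proof -
  note A = assoc_mult_mat[of _ n n _ n _ n]
  have "tau F G Z P = mtrace ((F * Z) * (G * P))" unfolding tau_def using c by (simp add: A)
  also have "\<dots> = mtrace ((G * P) * (F * Z))" using c by (intro tr_cyc[of _ n]) auto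
  also have "\<dots> = mtrace (G * (P * F) * Z)" using c by (simp add: A)
  also have "\<dots> = mtrace ((G * F) * P * Z)" using c FP by (simp add: A)
  also have "\<dots> = mtrace ((F * G) * P * Z)" using FG by simp
  also have "\<dots> = mtrace (F * (G * P) * Z)" using c by (simp add: A)
  also have "\<dots> = tau F G P Z" unfolding tau_def using c GP by (simp add: A)
  finally show ?thesis .
qed

lemma final_zero: fixes Z S :: "complex mat" and \<mu> \<eta> :: complex
  assumes Z: "Z \<in> carrier_mat n n" and S: "S \<in> carrier_mat n n"
  defines "P \<equiv> Z + \<mu> \<cdot>\<^sub>m S" and "Q \<equiv> Z + \<eta> \<cdot>\<^sub>m S"
  shows "tcon (P ^\<^sub>m a) (Q ^\<^sub>m b) [(1/2, 1\<^sub>m n, P * Q), (-1/2, Q * P, 1\<^sub>m n),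
     (1/2, P, Z), (-1/2, Z, P), (1/2, Q, Z), (-1/2, Z, Q)] = 0"
proof -
  have cP: "P \<in> carrier_mat n n" "Q \<in> carrier_mat n n" unfolding P_def Q_def using Z S by auto
  define F where "F = P ^\<^sub>m a"
  define G where "G = Q ^\<^sub>m b"
  have cF: "F \<in> carrier_mat n n" "G \<in> carrier_mat n n" unfolding F_def G_def using cP by auto
  have FP: "F * P = P * F" unfolding F_def by (rule pow_comm1[OF cP(1)])
  have GQ: "G * Q = Q * G" unfolding G_def by (rule pow_comm1[OF cP(2)])
  note ids = tr_identities[OF cF cP Z FP GQ]
  have lin: "tau F G Z P = tau F G Z Z + \<mu> * tau F G Z S" "tau F G P Z = tau F G Z Z + \<mu> * tau F G S Z"
     "tau F G Z Q = tau F G Z Z + \<eta> * tau F G Z S" "tau F G Q Z = tau F G Z Z + \<eta> * tau F G S Z"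
     "tau F G P Q = tau F G Z Z + \<eta> * tau F G Z S + \<mu> * tau F G S Z + \<mu> * \<eta> * tau F G S S"
     "tau F G Q P = tau F G Z Z + \<mu> * tau F G Z S + \<eta> * tau F G S Z + \<eta> * \<mu> * tau F G S S"
    unfolding P_def Q_def using tau_lin[OF cF Z Z S S] tau_lin[OF cF S Z S S] tau_lin[OF cF Z S S S]
      tau_lin[OF cF cP(1)[unfolded P_def] Z S S] tau_lin[OF cF cP(2)[unfolded Q_def] Z S S]
    by (simp_all add: algebra_simps)
  have key: "(\<mu> + \<eta>) * (tau F G Z S - tau F G S Z) = 0"
  proof (cases "\<mu> = \<eta>")
    case True
    have "G = F \<or> True" by simp
    have PQ: "Q = P" unfolding P_def Q_def True ..
    have GP: "G * P = P * G" using GQ PQ by simp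
    have FG: "F * G = G * F" unfolding F_def G_def PQ by (rule pow_comm2[OF cP(1)])
    have "tau F G Z P = tau F G P Z" by (rule tr_identity_eq[OF cF cP(1) Z FP GP FG])
    then have "\<mu> * (tau F G Z S - tau F G S Z) = 0" using lin by (simp add: algebra_simps)
    then show ?thesis using True by (simp add: algebra_simps)
  next
    case False
    have "(\<eta> - \<mu>) * (tau F G Z S - tau F G S Z) = 0" using ids(2) lin by (simp add: algebra_simps)
    then have "tau F G Z S - tau F G S Z = 0" using False by simp
    then show ?thesis by simp
  qed
  have "tcon F G [(1/2, 1\<^sub>m n, P * Q), (-1/2, Q * P, 1\<^sub>m n),
     (1/2, P, Z), (-1/2, Z, P), (1/2, Q, Z), (-1/2, Z, Q)] =
     1/2 * (mtrace (F * (P * Q) * G * 1\<^sub>m n) - mtrace (F * 1\<^sub>m n * G * (Q * P))) +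
     1/2 * (tau F G Z P - tau F G P Z + tau F G Z Q - tau F G Q Z)"
    unfolding tau_def by (simp add: algebra_simps)
  also have "\<dots> = 1/2 * ((\<mu> + \<eta>) * (tau F G Z S - tau F G S Z))"
    using ids(1) lin by (simp add: algebra_simps)
  also have "\<dots> = 0" using key by simp
  finally show ?thesis unfolding F_def G_def .
qed

theorem mainTheorem17:
  fixes n d k l :: nat and q \<mu> \<eta> :: complex and p :: point
  assumes "n \<ge> 1" and "d \<ge> 1" and "q \<noteq> 0" and "\<forall>m::nat. m > 0 \<longrightarrow> q ^ m \<noteq> 1"
    and "p \<in> Mx n d q"
  shows "qpb n d (trZpow n d \<mu> k) (trZpow n d \<eta> l) p = 0"
proof -
  define F where "F = Zeta n d \<mu> p ^\<^sub>m (k - 1)"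
  define G where "G = Zeta n d \<eta> p ^\<^sub>m (l - 1)"
  have cZ: "Zeta n d c p \<in> carrier_mat n n" for c using pmat_Zeta[of n d c] by simp
  have cF: "F \<in> carrier_mat n n" "G \<in> carrier_mat n n" unfolding F_def G_def using cZ by auto
  have E: "EmIs n d p (Zeta n d \<mu>) (Zeta n d \<eta>) (NICE n d p \<mu> \<eta>)" by (rule EPQ[OF assms(2)])
  have okN: "okl n (NICE n d p \<mu> \<eta>)" unfolding NICE_def using cZ by simp
  have "qpb n d (trZpow n d \<mu> k) (trZpow n d \<eta> l) p =
    (\<Sum>i<n. \<Sum>j<n. (of_nat k * F $$ (i,j)) *
       (\<Sum>a<n. \<Sum>b<n. (of_nat l * G $$ (a,b)) * tv (NICE n d p \<mu> \<eta>) j i b a))"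
    unfolding qpb_tr_expand F_def G_def using E unfolding EmIs_def
    by (intro sum.cong refl arg_cong[where f="\<lambda>x. _ * x"]) auto
  also have "\<dots> = of_nat k * of_nat l *
    (\<Sum>i<n. \<Sum>j<n. F $$ (i,j) * (\<Sum>a<n. \<Sum>b<n. G $$ (a,b) * tv (NICE n d p \<mu> \<eta>) j i b a))"
    by (simp add: sum_distrib_left algebra_simps)
  also have "\<dots> = of_nat k * of_nat l * tcon F G (NICE n d p \<mu> \<eta>)"
    by (simp add: contract[OF cF okN])
  also have "tcon F G (NICE n d p \<mu> \<eta>) = 0"
  proof -
    have S: "Af n d p * Zmat n p \<in> carrier_mat n n" by simp
    show ?thesis unfolding F_def G_def NICE_def Zeta_eq
      using final_zero[OF Zmat_carrier[of n p] S, where \<mu>=\<mu> and \<eta>=\<eta> and a="k - 1" and b="l - 1"] by simp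
  qed
  finally show ?thesis by simp
qed

end
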